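(* For all integers $m,n\ge2$, the (unnormalized) diagonal positive matrices in $M_m(\mathbb{C})\otimes M_n(\mathbb{C})$ $$\rho_1=\operatorname{diag}(\sqrt2+1,\sqrt2+1,1,\dots,1),\qquad \rho_2=\operatorname{diag}(2,2,2,1,\dots,1)$$ are absolutely PPT; that is, for every unitary $U$ of order $mn$, both $(U\rho_1U^\dagger)^\Gamma\ge0$ and $(U\rho_2U^\dagger)^\Gamma\ge0$.
   Context: The partial transpose is $M^\Gamma:=(T\otimes\mathrm{id})(M)$ with $T$ the transpose on the first factor $M_m(\mathbb{C})$. A (possibly unnormalized) positive semidefinite matrix $\rho$ is absolutely PPT if $(U\rho U^\dagger)^\Gamma$ is positive semidefinite for every global unitary $U$ on $\mathbb{C}^m\otimes\mathbb{C}^n$. *)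

theory Defs
  imports "Jordan_Normal_Form.Matrix" Complex_Main
begin

text \<open>Matrices in M_m(C) (x) M_n(C) are (m*n) x (m*n) complex matrices; the basis vector
  e_i (x) e_j (i < m, j < n) has flat index i*n + j (Kronecker ordering).\<close>

definition adjoint_mat :: "complex mat \<Rightarrow> complex mat" where
  "adjoint_mat A = mat (dim_col A) (dim_row A) (\<lambda>(i,j). cnj (A $$ (j,i)))"

definition unitary_mat :: "nat \<Rightarrow> complex mat \<Rightarrow> bool" where
  "unitary_mat d U \<longleftrightarrow> U \<in> carrier_mat d d \<and> U * adjoint_mat U = 1\<^sub>m d \<and> adjoint_mat U * U = 1\<^sub>m d"

definition psd_mat :: "nat \<Rightarrow> complex mat \<Rightarrow> bool" where
  "psd_mat d A \<longleftrightarrow> A \<in> carrier_mat d d \<and>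
     (\<forall>v \<in> carrier_vec d.
        let q = (\<Sum>i<d. \<Sum>j<d. cnj (v $ i) * A $$ (i,j) * v $ j)
        in Im q = 0 \<and> Re q \<ge> 0)"

text \<open>Partial transpose on the first factor M_m(C).
  (M^Gamma)_{(i,j),(k,l)} = M_{(k,j),(i,l)}.\<close>
definition partial_transpose :: "nat \<Rightarrow> nat \<Rightarrow> complex mat \<Rightarrow> complex mat" where
  "partial_transpose m n M = mat (m*n) (m*n)
     (\<lambda>(a,b). M $$ ((b div n) * n + a mod n, (a div n) * n + b mod n))"

definition absolutely_PPT :: "nat \<Rightarrow> nat \<Rightarrow> complex mat \<Rightarrow> bool" where
  "absolutely_PPT m n \<rho> \<longleftrightarrow> psd_mat (m*n) \<rho> \<and>
     (\<forall>U. unitary_mat (m*n) U \<longrightarrow>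
        psd_mat (m*n) (partial_transpose m n (U * \<rho> * adjoint_mat U)))"

definition diag_mat_of :: "nat \<Rightarrow> (nat \<Rightarrow> complex) \<Rightarrow> complex mat" where
  "diag_mat_of d f = mat d d (\<lambda>(i,j). if i = j then f i else 0)"

definition rho1 :: "nat \<Rightarrow> nat \<Rightarrow> complex mat" where
  "rho1 m n = diag_mat_of (m*n) (\<lambda>i. if i < 2 then complex_of_real (sqrt 2 + 1) else 1)"

definition rho2 :: "nat \<Rightarrow> nat \<Rightarrow> complex mat" where
  "rho2 m n = diag_mat_of (m*n) (\<lambda>i. if i < 3 then 2 else 1)"

end

theory Submission
  imports Defs "Jordan_Normal_Form.Spectral_Radius"
begin

lemma adjoint_dim[simp]: "dim_row (adjoint_mat A) = dim_col A" "dim_col (adjoint_mat A) = dim_row A"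
  by (auto simp: adjoint_mat_def)

lemma adjoint_index[simp]: "i < dim_col A \<Longrightarrow> j < dim_row A \<Longrightarrow> adjoint_mat A $$ (i,j) = cnj (A $$ (j,i))"
  by (auto simp: adjoint_mat_def)

lemma adjoint_carrier[simp]: "A \<in> carrier_mat n k \<Longrightarrow> adjoint_mat A \<in> carrier_mat k n"
  by (intro carrier_matI) (auto dest: carrier_matD)

lemma adjoint_adjoint[simp]: "adjoint_mat (adjoint_mat A) = A"
  by (intro eq_matI) auto

lemma adjoint_mult: assumes "A \<in> carrier_mat n k" "B \<in> carrier_mat k l"
  shows "adjoint_mat (A*B) = adjoint_mat B * adjoint_mat A"
  using assms by (intro eq_matI) (auto simp: scalar_prod_def cnj_sum mult.commute)

lemma adjoint_one[simp]: "adjoint_mat (1\<^sub>m n) = 1\<^sub>m n"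
  by (intro eq_matI) auto

lemma unitary_mult: assumes "unitary_mat d A" "unitary_mat d B"
  shows "unitary_mat d (A*B)"
proof -
  have A: "A \<in> carrier_mat d d" and B: "B \<in> carrier_mat d d" using assms unfolding unitary_mat_def by auto
  have aA: "adjoint_mat A \<in> carrier_mat d d" and aB: "adjoint_mat B \<in> carrier_mat d d" using A B by auto
  have 1: "A * adjoint_mat A = 1\<^sub>m d" "adjoint_mat A * A = 1\<^sub>m d" "B * adjoint_mat B = 1\<^sub>m d" "adjoint_mat B * B = 1\<^sub>m d"
    using assms unfolding unitary_mat_def by auto
  have "A * B * adjoint_mat (A * B) = A * B * (adjoint_mat B * adjoint_mat A)"
    by (simp add: adjoint_mult[OF A B])
  also have "\<dots> = A * (B * (adjoint_mat B * adjoint_mat A))"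
    by (rule assoc_mult_mat[OF A B mult_carrier_mat[OF aB aA]])
  also have "B * (adjoint_mat B * adjoint_mat A) = (B * adjoint_mat B) * adjoint_mat A"
    by (rule assoc_mult_mat[OF B aB aA, symmetric])
  also have "(B * adjoint_mat B) * adjoint_mat A = adjoint_mat A" using 1 by (simp add: left_mult_one_mat[OF aA])
  also have "A * adjoint_mat A = 1\<^sub>m d" using 1 by simp
  finally have x: "A * B * adjoint_mat (A * B) = 1\<^sub>m d" .
  have "adjoint_mat (A * B) * (A * B) = adjoint_mat B * adjoint_mat A * (A * B)"
    by (simp add: adjoint_mult[OF A B])
  also have "\<dots> = adjoint_mat B * (adjoint_mat A * (A * B))"
    by (rule assoc_mult_mat[OF aB aA mult_carrier_mat[OF A B]])
  also have "adjoint_mat A * (A * B) = (adjoint_mat A * A) * B"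
    by (rule assoc_mult_mat[OF aA A B, symmetric])
  also have "(adjoint_mat A * A) * B = B" using 1 by (simp add: left_mult_one_mat[OF B])
  also have "adjoint_mat B * B = 1\<^sub>m d" using 1 by simp
  finally have y: "adjoint_mat (A * B) * (A * B) = 1\<^sub>m d" .
  have "A * B \<in> carrier_mat d d" using A B by (rule mult_carrier_mat)
  then show ?thesis using x y unfolding unitary_mat_def by blast
qed

definition blk :: "nat \<Rightarrow> complex \<Rightarrow> complex mat \<Rightarrow> complex mat" where
  "blk n x M = mat (Suc n) (Suc n) (\<lambda>(i,j). if i = 0 \<and> j = 0 then x else if i = 0 \<or> j = 0 then 0 else M $$ (i - 1, j - 1))"

lemma blk_carrier[simp]: "blk n x M \<in> carrier_mat (Suc n) (Suc n)"
  and blk_dim[simp]: "dim_row (blk n x M) = Suc n" "dim_col (blk n x M) = Suc n"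
  by (auto simp: blk_def)

lemma blk_index: "i < Suc n \<Longrightarrow> j < Suc n \<Longrightarrow> blk n x M $$ (i,j) = (if i = 0 \<and> j = 0 then x else if i = 0 \<or> j = 0 then 0 else M $$ (i - 1, j - 1))"
  by (auto simp: blk_def)

lemma blk_index0[simp]: "blk n x M $$ (0,0) = x" "j < n \<Longrightarrow> blk n x M $$ (0, Suc j) = 0"
  "i < n \<Longrightarrow> blk n x M $$ (Suc i, 0) = 0" "i < n \<Longrightarrow> j < n \<Longrightarrow> blk n x M $$ (Suc i, Suc j) = M $$ (i,j)"
  by (auto simp: blk_def)

lemma blk_mult: assumes "A \<in> carrier_mat n n" "B \<in> carrier_mat n n"
  shows "blk n x A * blk n y B = blk n (x*y) (A*B)"
proof (intro eq_matI)
  fix i j assume i: "i < dim_row (blk n (x*y) (A*B))" and j: "j < dim_col (blk n (x*y) (A*B))"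
  then have i: "i < Suc n" and j: "j < Suc n" by auto
  have "(blk n x A * blk n y B) $$ (i,j) = (\<Sum>k<Suc n. blk n x A $$ (i,k) * blk n y B $$ (k,j))"
    using i j by (simp add: scalar_prod_def atLeast0LessThan)
  also have "\<dots> = blk n x A $$ (i,0) * blk n y B $$ (0,j) + (\<Sum>k<n. blk n x A $$ (i,Suc k) * blk n y B $$ (Suc k,j))"
    by (rule sum.lessThan_Suc_shift)
  also have "\<dots> = blk n (x*y) (A*B) $$ (i,j)"
  proof (cases i)
    case 0
    then have "(\<Sum>k<n. blk n x A $$ (i,Suc k) * blk n y B $$ (Suc k,j)) = 0"
      by (intro sum.neutral) auto
    then show ?thesis using 0 j by (cases j) auto
  next
    case (Suc i')
    show ?thesis
    proof (cases j)
      case 0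
      then have "(\<Sum>k<n. blk n x A $$ (i,Suc k) * blk n y B $$ (Suc k,j)) = 0"
        using Suc i by (intro sum.neutral) auto
      then show ?thesis using 0 Suc i by auto
    next
      case (Suc j')
      have "(\<Sum>k<n. blk n x A $$ (i,Suc k) * blk n y B $$ (Suc k,j)) = (\<Sum>k<n. A $$ (i',k) * B $$ (k,j'))"
        using Suc \<open>i = Suc i'\<close> i j by (intro sum.cong) auto
      then show ?thesis using Suc \<open>i = Suc i'\<close> i j assms
        by (simp add: scalar_prod_def atLeast0LessThan)
    qed
  qed
  finally show "(blk n x A * blk n y B) $$ (i,j) = blk n (x*y) (A*B) $$ (i,j)" .
qed auto

lemma blk_adjoint: assumes "A \<in> carrier_mat n n" shows "adjoint_mat (blk n x A) = blk n (cnj x) (adjoint_mat A)"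
  using assms by (intro eq_matI) (auto simp: blk_index)

lemma blk_one: "blk n 1 (1\<^sub>m n) = 1\<^sub>m (Suc n)"
  by (intro eq_matI) (auto simp: blk_index)


lemma mult_cnj_real: "z * cnj z = complex_of_real ((cmod z)^2)"
  using complex_norm_square by (simp add: mult.commute)

lemma householder:
  fixes z :: "nat \<Rightarrow> complex"
  assumes unit: "(\<Sum>i<N. z i * cnj (z i)) = 1" and z0: "Im (z 0) = 0" and N: "0 < N"
  shows "\<exists>W. unitary_mat N W \<and> (\<forall>i<N. W $$ (i,0) = z i)"
proof -
  define w where "w i = (if i = 0 then 1 else 0) - z i" for i
  define c where "c = (\<Sum>i<N. w i * cnj (w i))"
  define W where "W = mat N N (\<lambda>(i,j). (if i = j then 1 else 0) - (if c = 0 then 0 else 2 * w i * cnj (w j) / c))"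
  have cz0: "cnj (z 0) = z 0" using z0 by (simp add: complex_eq_iff)
  have ccnj: "cnj c = c" unfolding c_def by (simp add: cnj_sum mult.commute)
  have pw: "w i * cnj (w i) = (if i = 0 then 1 - cnj (z 0) - z 0 else 0) + z i * cnj (z i)" for i
    by (auto simp: w_def algebra_simps)
  have "c = (\<Sum>i<N. (if i = 0 then 1 - cnj (z 0) - z 0 else 0)) + (\<Sum>i<N. z i * cnj (z i))"
    unfolding c_def pw by (rule sum.distrib)
  also have "\<dots> = 2 - 2 * z 0" using N unit cz0 by (simp add: sum.delta)
  finally have c2: "c = 2 * w 0" by (simp add: w_def)
  have cw0: "cnj (w 0) = w 0" using cz0 by (simp add: w_def)
  have Wc: "W \<in> carrier_mat N N" by (simp add: W_def)
  have adjW: "adjoint_mat W = W"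
    by (intro eq_matI) (auto simp: W_def ccnj)
  have WW: "W * W = 1\<^sub>m N"
  proof (intro eq_matI)
    fix i j assume i: "i < dim_row (1\<^sub>m N)" and j: "j < dim_col (1\<^sub>m N)"
    then have i: "i < N" and j: "j < N" by auto
    define a where "a = (if c = 0 then 0 else 2 / c)"
    have Wij: "W $$ (p,q) = (if p = q then 1 else 0) - a * w p * cnj (w q)" if "p < N" "q < N" for p q
      using that by (auto simp: W_def a_def)
    have "(W * W) $$ (i,j) = (\<Sum>k<N. W $$ (i,k) * W $$ (k,j))"
      using i j Wc by (simp add: scalar_prod_def atLeast0LessThan)
    also have "\<dots> = (\<Sum>k<N. (if k = i then (if i = j then 1 else 0) - a * w i * cnj (w j) else 0)
         - (if k = j then a * w i * cnj (w j) else 0) + a * a * w i * cnj (w j) * (w k * cnj (w k)))"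
      by (intro sum.cong refl, simp add: Wij i j) (auto simp: algebra_simps)
    also have "\<dots> = (if i = j then 1 else 0) - a * w i * cnj (w j) - a * w i * cnj (w j) + a * a * w i * cnj (w j) * c"
      using i j by (simp add: sum.distrib sum_subtractf sum_distrib_left[symmetric] c_def)
    also have "\<dots> = (if i = j then 1 else 0)"
      by (cases "c = 0") (auto simp: a_def field_simps)
    finally show "(W * W) $$ (i,j) = 1\<^sub>m N $$ (i,j)" using i j by simp
  qed (use Wc in auto)
  have col0: "W $$ (i,0) = z i" if i: "i < N" for i
  proof (cases "c = 0")
    case True
    have "complex_of_real (\<Sum>i<N. (cmod (w i))^2) = 0"
      using True unfolding c_def mult_cnj_real by (simp add: of_real_sum)
    then have "(\<Sum>i<N. (cmod (w i))^2) = 0" by (simp only: of_real_eq_0_iff)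
    then have "\<forall>i\<in>{..<N}. (cmod (w i))^2 = 0" by (subst (asm) sum_nonneg_eq_0_iff) auto
    then have "w i = 0" using i by auto
    then show ?thesis using True i N by (auto simp: W_def w_def split: if_splits)
  next
    case False
    then have "w 0 \<noteq> 0" using c2 by auto
    then have "2 * w i * cnj (w 0) / c = w i" using c2 cw0 by (simp add: field_simps)
    then show ?thesis using False i N by (auto simp: W_def w_def)
  qed
  have "unitary_mat N W" unfolding unitary_mat_def using Wc adjW WW by simp
  then show ?thesis using col0 by blast
qed


lemma unitary_blk: assumes "unitary_mat n C" shows "unitary_mat (Suc n) (blk n 1 C)"
proof -
  have C: "C \<in> carrier_mat n n" and 1: "C * adjoint_mat C = 1\<^sub>m n" "adjoint_mat C * C = 1\<^sub>m n"
    using assms unfolding unitary_mat_def by auto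
  have aC: "adjoint_mat C \<in> carrier_mat n n" using C by simp
  show ?thesis unfolding unitary_mat_def
    using blk_mult[OF C aC, of 1 1] blk_mult[OF aC C, of 1 1] 1 blk_adjoint[OF C, of 1] blk_one[of n]
    by simp
qed

lemma adjoint3: assumes "A \<in> carrier_mat d d" "B \<in> carrier_mat d d" "C \<in> carrier_mat d d"
  shows "adjoint_mat (A * B * C) = adjoint_mat C * adjoint_mat B * adjoint_mat A"
proof -
  have "adjoint_mat (A * B * C) = adjoint_mat C * adjoint_mat (A * B)"
    using assms by (intro adjoint_mult) auto
  also have "\<dots> = adjoint_mat C * (adjoint_mat B * adjoint_mat A)"
    using assms by (simp add: adjoint_mult)
  also have "\<dots> = adjoint_mat C * adjoint_mat B * adjoint_mat A"
    using assms by (intro assoc_mult_mat[symmetric]) auto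
  finally show ?thesis .
qed

lemma assoc5: assumes A: "A \<in> carrier_mat d d" and B: "B \<in> carrier_mat d d" and C: "C \<in> carrier_mat d d"
  and E: "E \<in> carrier_mat d d" and F: "F \<in> carrier_mat d d"
  shows "A * B * C * (E * F) = A * (B * C * E) * F"
proof -
  have EF: "E * F \<in> carrier_mat d d" using E F by simp
  have BC: "B * C \<in> carrier_mat d d" using B C by simp
  have AB: "A * B \<in> carrier_mat d d" using A B by simp
  have "A * B * C * (E * F) = A * B * (C * (E * F))" by (rule assoc_mult_mat[OF AB C EF])
  also have "\<dots> = A * (B * (C * (E * F)))" by (rule assoc_mult_mat[OF A B mult_carrier_mat[OF C EF]])
  also have "B * (C * (E * F)) = B * C * (E * F)" by (rule assoc_mult_mat[OF B C EF, symmetric])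
  also have "\<dots> = B * C * E * F" by (rule assoc_mult_mat[OF BC E F, symmetric])
  also have "A * (B * C * E * F) = A * (B * C * E) * F" by (rule assoc_mult_mat[OF A _ F, symmetric]) (use BC E in simp)
  finally show ?thesis .
qed

lemma spectral:
  assumes "K \<in> carrier_mat n n" "adjoint_mat K = K"
  shows "\<exists>C. unitary_mat n C \<and> (\<forall>i<n. \<forall>j<n. i \<noteq> j \<longrightarrow> (adjoint_mat C * K * C) $$ (i,j) = 0)"
  using assms
proof (induction n arbitrary: K)
  case 0
  then show ?case by (intro exI[of _ "1\<^sub>m 0"]) (auto simp: unitary_mat_def)
next
  case (Suc n)
  have K: "K \<in> carrier_mat (Suc n) (Suc n)" and hK: "adjoint_mat K = K" using Suc by auto
  obtain e where "eigenvalue K e" using spectrum_non_empty[OF K] unfolding spectrum_def by auto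
  then obtain v where v: "v \<in> carrier_vec (Suc n)" "v \<noteq> 0\<^sub>v (Suc n)" "K *\<^sub>v v = e \<cdot>\<^sub>v v"
    unfolding eigenvalue_def eigenvector_def using K by auto
  define s where "s = (\<Sum>i<Suc n. (cmod (v $ i))^2)"
  obtain i0 where i0: "i0 < Suc n" "v $ i0 \<noteq> 0"
    using v(1,2) by (metis eq_vecI carrier_vecD index_zero_vec)
  have spos: "s > 0" unfolding s_def
    by (rule sum_pos2[of _ i0]) (use i0 in auto)
  define ph where "ph = (if v $ 0 = 0 then 1 else cnj (v $ 0) / complex_of_real (cmod (v $ 0)))"
  have vv: "v $ 0 * cnj (v $ 0) = complex_of_real (cmod (v $ 0)) * complex_of_real (cmod (v $ 0))"
    by (simp add: mult_cnj_real power2_eq_square)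
  have ph1: "ph * cnj ph = 1"
    using vv by (auto simp: ph_def field_simps)
  define zv where "zv = (ph / complex_of_real (sqrt s)) \<cdot>\<^sub>v v"
  have zv: "zv \<in> carrier_vec (Suc n)" using v by (simp add: zv_def)
  have Kz: "K *\<^sub>v zv = e \<cdot>\<^sub>v zv"
    unfolding zv_def using mult_mat_vec[OF K v(1)] v(3) by (simp add: smult_smult_assoc mult.commute)
  have unit: "(\<Sum>i<Suc n. zv $ i * cnj (zv $ i)) = 1"
  proof -
    have "(\<Sum>i<Suc n. zv $ i * cnj (zv $ i)) = (\<Sum>i<Suc n. (ph * cnj ph) / complex_of_real s * (v $ i * cnj (v $ i)))"
      using v(1) spos by (intro sum.cong refl) (auto simp: zv_def field_simps real_sqrt_mult[symmetric] simp flip: of_real_mult)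
    also have "\<dots> = 1 / complex_of_real s * (\<Sum>i<Suc n. v $ i * cnj (v $ i))"
      unfolding ph1 sum_distrib_left by simp
    also have "(\<Sum>i<Suc n. v $ i * cnj (v $ i)) = complex_of_real s"
      unfolding s_def mult_cnj_real by (simp add: of_real_sum)
    finally show ?thesis using spos by simp
  qed
  have z0: "Im (zv $ 0) = 0"
  proof (cases "v $ 0 = 0")
    case True then show ?thesis using v(1) by (simp add: zv_def)
  next
    case False
    have "ph * v $ 0 = complex_of_real (cmod (v $ 0))"
      using False vv by (simp add: ph_def field_simps)
    then have "zv $ 0 = complex_of_real (cmod (v $ 0) / sqrt s)" using v(1) by (simp add: zv_def)
    then show ?thesis by simp
  qed
  obtain W where W: "unitary_mat (Suc n) W" and Wcol: "\<forall>i<Suc n. W $$ (i,0) = zv $ i"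
    using householder[OF unit z0] by auto
  have Wc: "W \<in> carrier_mat (Suc n) (Suc n)" and WW: "adjoint_mat W * W = 1\<^sub>m (Suc n)"
    using W unfolding unitary_mat_def by auto
  have aWc: "adjoint_mat W \<in> carrier_mat (Suc n) (Suc n)" using Wc by simp
  have colW: "col W 0 = zv" using Wcol Wc zv by (intro eq_vecI) auto
  define K1 where "K1 = adjoint_mat W * K * W"
  have K1c: "K1 \<in> carrier_mat (Suc n) (Suc n)" unfolding K1_def by (rule mult_carrier_mat[OF mult_carrier_mat[OF aWc K] Wc])
  have "col K1 0 = (adjoint_mat W * K) *\<^sub>v col W 0"
    unfolding K1_def using Wc aWc K by (intro col_mult2) auto
  also have "\<dots> = adjoint_mat W *\<^sub>v (K *\<^sub>v zv)" unfolding colW using aWc K zv by simp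
  also have "\<dots> = e \<cdot>\<^sub>v (adjoint_mat W *\<^sub>v col W 0)" unfolding Kz colW using aWc zv by (simp add: mult_mat_vec)
  also have "adjoint_mat W *\<^sub>v col W 0 = col (adjoint_mat W * W) 0"
    using aWc Wc by (intro col_mult2[symmetric]) auto
  also have "\<dots> = unit_vec (Suc n) 0" unfolding WW by simp
  finally have colK1: "col K1 0 = e \<cdot>\<^sub>v unit_vec (Suc n) 0" .
  have K1i0: "K1 $$ (i,0) = (if i = 0 then e else 0)" if "i < Suc n" for i
  proof -
    have "K1 $$ (i,0) = col K1 0 $ i" using that K1c by simp
    then show ?thesis unfolding colK1 using that by simp
  qed
  have hK1: "adjoint_mat K1 = K1"
    unfolding K1_def by (simp add: adjoint3[OF aWc K Wc] hK)
  have K10j: "K1 $$ (0,j) = 0" if "0 < j" "j < Suc n" for j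
  proof -
    have "K1 $$ (0,j) = adjoint_mat K1 $$ (0,j)" using hK1 by simp
    also have "\<dots> = cnj (K1 $$ (j,0))" using that K1c by simp
    finally show ?thesis using K1i0[OF that(2)] that by simp
  qed
  define K' where "K' = mat n n (\<lambda>(i,j). K1 $$ (Suc i, Suc j))"
  have K'c: "K' \<in> carrier_mat n n" by (simp add: K'_def)
  have hK': "adjoint_mat K' = K'"
  proof (intro eq_matI)
    fix i j assume "i < dim_row K'" "j < dim_col K'"
    then have ij: "i < n" "j < n" by (auto simp: K'_def)
    have "adjoint_mat K' $$ (i,j) = cnj (K1 $$ (Suc j, Suc i))" using ij by (simp add: K'_def)
    also have "\<dots> = adjoint_mat K1 $$ (Suc i, Suc j)" using ij K1c by simp
    finally show "adjoint_mat K' $$ (i,j) = K' $$ (i,j)" using hK1 ij by (simp add: K'_def)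
  qed (auto simp: K'_def)
  define k0 where "k0 = K1 $$ (0,0)"
  have K1blk: "K1 = blk n k0 K'"
  proof (intro eq_matI)
    fix i j assume "i < dim_row (blk n k0 K')" "j < dim_col (blk n k0 K')"
    then have ij: "i < Suc n" "j < Suc n" by auto
    show "K1 $$ (i,j) = blk n k0 K' $$ (i,j)"
      using ij K1i0 K10j by (cases i; cases j) (auto simp: blk_index K'_def k0_def)
  qed (use K1c in auto)
  obtain C' where C': "unitary_mat n C'" and offd: "\<forall>i<n. \<forall>j<n. i \<noteq> j \<longrightarrow> (adjoint_mat C' * K' * C') $$ (i,j) = 0"
    using Suc.IH[OF K'c hK'] by auto
  have C'c: "C' \<in> carrier_mat n n" using C' unfolding unitary_mat_def by auto
  define D where "D = blk n 1 C'"
  have Dc: "D \<in> carrier_mat (Suc n) (Suc n)" by (simp add: D_def)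
  have aDc: "adjoint_mat D \<in> carrier_mat (Suc n) (Suc n)" using Dc by simp
  have UD: "unitary_mat (Suc n) (W * D)" using unitary_mult[OF W unitary_blk[OF C']] by (simp add: D_def)
  have "adjoint_mat (W * D) * K * (W * D) = (adjoint_mat D * adjoint_mat W) * K * (W * D)"
    using adjoint_mult[OF Wc Dc] by simp
  also have "\<dots> = adjoint_mat D * K1 * D"
    unfolding K1_def by (rule assoc5[OF aDc aWc K Wc Dc])
  also have "\<dots> = blk n (1 * k0 * 1) (adjoint_mat C' * K' * C')"
    unfolding D_def blk_adjoint[OF C'c] K1blk
    using blk_mult[OF adjoint_carrier[OF C'c] K'c] blk_mult[OF mult_carrier_mat[OF adjoint_carrier[OF C'c] K'c] C'c] by simp
  finally have eq: "adjoint_mat (W * D) * K * (W * D) = blk n k0 (adjoint_mat C' * K' * C')" by simp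
  show ?case
  proof (intro exI[of _ "W * D"] conjI UD allI impI)
    fix i j assume ij: "i < Suc n" "j < Suc n" "i \<noteq> j"
    show "(adjoint_mat (W * D) * K * (W * D)) $$ (i,j) = 0"
      unfolding eq using ij offd by (auto simp: blk_index)
  qed
qed


lemma amgm2: fixes x y a :: real assumes "0 < a" shows "2 * x * y \<le> a * x^2 + y^2 / a"
proof -
  have "0 \<le> (a*x - y)^2 / a" using assms by simp
  also have "(a*x - y)^2 / a = a * x^2 + y^2 / a - 2 * x * y"
    using assms by (simp add: field_simps power2_eq_square)
  finally show ?thesis by simp
qed

lemma weighted_bound:
  fixes \<sigma> :: "nat \<Rightarrow> real" and T \<alpha> :: "nat \<Rightarrow> nat \<Rightarrow> real"
  assumes sym: "\<And>p q. p < n \<Longrightarrow> q < n \<Longrightarrow> T p q = T q p"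
    and nn: "\<And>p q. p < n \<Longrightarrow> q < n \<Longrightarrow> 0 \<le> T p q"
    and al: "\<And>p q. p < n \<Longrightarrow> q < n \<Longrightarrow> 0 < \<alpha> p q \<and> \<alpha> q p = 1 / \<alpha> p q"
  shows "(\<Sum>p<n. \<Sum>q<n. T p q * \<sigma> p * \<sigma> q) \<le> (\<Sum>p<n. \<sigma> p^2 * (\<Sum>q<n. T p q * \<alpha> p q))"
proof -
  have le: "T p q * \<sigma> p * \<sigma> q \<le> (T p q * \<alpha> p q * \<sigma> p^2 + T q p * \<alpha> q p * \<sigma> q^2) / 2"
    if "p < n" "q < n" for p q
  proof -
    have "2 * \<sigma> p * \<sigma> q \<le> \<alpha> p q * \<sigma> p^2 + \<sigma> q^2 / \<alpha> p q" using al[OF that] amgm2 by blast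
    then have "T p q * (2 * \<sigma> p * \<sigma> q) \<le> T p q * (\<alpha> p q * \<sigma> p^2 + \<sigma> q^2 / \<alpha> p q)"
      by (rule mult_left_mono[OF _ nn[OF that]])
    then show ?thesis using al[OF that] sym[OF that] by (simp add: field_simps)
  qed
  have "(\<Sum>p<n. \<Sum>q<n. T p q * \<sigma> p * \<sigma> q) \<le> (\<Sum>p<n. \<Sum>q<n. (T p q * \<alpha> p q * \<sigma> p^2 + T q p * \<alpha> q p * \<sigma> q^2) / 2)"
    by (intro sum_mono le) auto
  also have "\<dots> = ((\<Sum>p<n. \<Sum>q<n. T p q * \<alpha> p q * \<sigma> p^2) + (\<Sum>p<n. \<Sum>q<n. T q p * \<alpha> q p * \<sigma> q^2)) / 2"
    by (simp only: sum_divide_distrib[symmetric] sum.distrib)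
  also have "(\<Sum>p<n. \<Sum>q<n. T q p * \<alpha> q p * \<sigma> q^2) = (\<Sum>p<n. \<Sum>q<n. T p q * \<alpha> p q * \<sigma> p^2)"
    by (rule sum.swap)
  also have "((\<Sum>p<n. \<Sum>q<n. T p q * \<alpha> p q * \<sigma> p^2) + (\<Sum>p<n. \<Sum>q<n. T p q * \<alpha> p q * \<sigma> p^2)) / 2
     = (\<Sum>p<n. \<sigma> p^2 * (\<Sum>q<n. T p q * \<alpha> p q))"
    by (simp add: sum_distrib_left mult.commute mult.left_commute)
  finally show ?thesis .
qed

lemma opt3:
  fixes \<sigma> :: "nat \<Rightarrow> real" and T :: "nat \<Rightarrow> nat \<Rightarrow> real"
  assumes sym: "\<And>p q. p < n \<Longrightarrow> q < n \<Longrightarrow> T p q = T q p"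
    and nn: "\<And>p q. p < n \<Longrightarrow> q < n \<Longrightarrow> 0 \<le> T p q"
    and le1: "\<And>p q. p < n \<Longrightarrow> q < n \<Longrightarrow> T p q \<le> 1"
    and diag: "\<And>p. p < n \<Longrightarrow> T p p = 0"
    and tot: "(\<Sum>p<n. \<Sum>q<n. T p q) \<le> 6"
  shows "(\<Sum>p<n. \<Sum>q<n. T p q * \<sigma> p * \<sigma> q) \<le> 2 * (\<Sum>p<n. \<sigma> p^2)"
proof -
  define D where "D p = (\<Sum>q<n. T p q)" for p
  have Dnn: "0 \<le> D p" if "p < n" for p unfolding D_def using nn that by (intro sum_nonneg) auto
  show ?thesis
  proof (cases "\<forall>p<n. D p \<le> 2")
    case True
    have "(\<Sum>p<n. \<Sum>q<n. T p q * \<sigma> p * \<sigma> q) \<le> (\<Sum>p<n. \<sigma> p^2 * (\<Sum>q<n. T p q * 1))"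
      by (rule weighted_bound[OF sym nn]) auto
    also have "\<dots> \<le> (\<Sum>p<n. \<sigma> p^2 * 2)"
      using True by (intro sum_mono mult_left_mono) (auto simp: D_def)
    finally show ?thesis by (simp add: sum_distrib_left mult.commute)
  next
    case False
    then obtain a where a: "a < n" "D a > 2" by auto
    define l where "l = D a / 2"
    have l1: "l > 1" using a by (simp add: l_def)
    define \<alpha> where "\<alpha> p q = (if p = a \<and> q \<noteq> a then 1 / l else if q = a \<and> p \<noteq> a then l else 1)" for p q
    have colsum: "(\<Sum>p'<n. T p' x) = D x" if "x < n" for x
      unfolding D_def using sym that by (intro sum.cong) auto
    have key: "D a + D p - T p a \<le> 3" if p: "p < n" "p \<noteq> a" for p
    proof -
      let ?R = "{..<n} - {a,p}"
      have sub: "{a,p} \<subseteq> {..<n}" using a p by auto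
      have e1: "(\<Sum>p'<n. D p') = (\<Sum>p'\<in>?R. D p') + (\<Sum>p'\<in>{a,p}. D p')"
        by (rule sum.subset_diff[OF sub]) auto
      have e1': "(\<Sum>p'\<in>{a,p}. D p') = D a + D p" using p by simp
      have e2: "(\<Sum>p'\<in>?R. D p') \<ge> (\<Sum>p'\<in>?R. T p' a + T p' p)"
      proof (intro sum_mono)
        fix p' assume "p' \<in> ?R"
        then have p': "p' < n" by auto
        have "(\<Sum>q\<in>{a,p}. T p' q) \<le> (\<Sum>q<n. T p' q)"
          using sub nn p' by (intro sum_mono2) auto
        then show "T p' a + T p' p \<le> D p'" using p by (simp add: D_def)
      qed
      have e3: "(\<Sum>p'\<in>?R. T p' a + T p' p) = (\<Sum>p'\<in>?R. T p' a) + (\<Sum>p'\<in>?R. T p' p)"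
        by (rule sum.distrib)
      have e4: "(\<Sum>p'\<in>?R. T p' a) = D a - T p a"
      proof -
        have "(\<Sum>p'<n. T p' a) = (\<Sum>p'\<in>?R. T p' a) + (\<Sum>p'\<in>{a,p}. T p' a)"
          by (rule sum.subset_diff[OF sub]) auto
        then show ?thesis using colsum[OF a(1)] diag[OF a(1)] p by simp
      qed
      have e5: "(\<Sum>p'\<in>?R. T p' p) = D p - T a p"
      proof -
        have "(\<Sum>p'<n. T p' p) = (\<Sum>p'\<in>?R. T p' p) + (\<Sum>p'\<in>{a,p}. T p' p)"
          by (rule sum.subset_diff[OF sub]) auto
        then show ?thesis using colsum[OF p(1)] diag[OF p(1)] p by simp
      qed
      have "D a - T p a + (D p - T a p) + (D a + D p) \<le> (\<Sum>p'<n. D p')"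
        using e1 e1' e2 e3 e4 e5 by linarith
      moreover have "(\<Sum>p'<n. D p') \<le> 6" using tot by (simp add: D_def)
      ultimately show ?thesis using sym[OF a(1) p(1)] by simp
    qed
    have "(\<Sum>p<n. \<Sum>q<n. T p q * \<sigma> p * \<sigma> q) \<le> (\<Sum>p<n. \<sigma> p^2 * (\<Sum>q<n. T p q * \<alpha> p q))"
      by (rule weighted_bound[OF sym nn]) (use l1 in \<open>auto simp: \<alpha>_def\<close>)
    also have "\<dots> \<le> (\<Sum>p<n. \<sigma> p^2 * 2)"
    proof (intro sum_mono mult_left_mono)
      fix p assume p: "p \<in> {..<n}"
      show "(\<Sum>q<n. T p q * \<alpha> p q) \<le> 2"
      proof (cases "p = a")
        case True
        have "(\<Sum>q<n. T p q * \<alpha> p q) = (\<Sum>q<n. T p q / l)"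
          using True diag a by (intro sum.cong) (auto simp: \<alpha>_def)
        also have "\<dots> = D a / l" using True by (simp add: D_def sum_divide_distrib)
        finally show ?thesis using l1 by (simp add: l_def)
      next
        case False
        have "(\<Sum>q<n. T p q * \<alpha> p q) = (\<Sum>q<n. T p q + (if q = a then (l - 1) * T p q else 0))"
          using False by (intro sum.cong) (auto simp: \<alpha>_def algebra_simps)
        also have "\<dots> = D p + (l - 1) * T p a" using a by (simp add: sum.distrib D_def)
        finally have eq: "(\<Sum>q<n. T p q * \<alpha> p q) = D p + (l - 1) * T p a" .
        have "T p a \<le> 1" using le1 p a by auto
        then have m: "D a * T p a \<le> D a" using a by (simp add: mult_left_le)
        have eq': "(\<Sum>q<n. T p q * \<alpha> p q) = D p + D a * T p a / 2 - T p a"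
          using eq by (simp add: l_def algebra_simps)
        have k: "D a + D p - T p a \<le> 3" using key p False by auto
        show ?thesis using eq' m k a by linarith
      qed
    qed simp
    finally show ?thesis by (simp add: sum_distrib_left mult.commute)
  qed
qed


lemma tri_ineq: fixes x y z :: real shows "sqrt 2 * (x * y + x * z) \<le> x^2 + y^2 + z^2"
proof -
  define s where "s = sqrt (2::real)"
  define Y where "Y = s * (y + z) / 2"
  have s2: "s^2 = 2" by (simp add: s_def)
  have a: "2 * x * Y \<le> 1 * x^2 + Y^2 / 1" by (rule amgm2) simp
  have b: "Y^2 = s^2 * (y+z)^2 / 4" by (simp add: Y_def power_mult_distrib power_divide)
  have c: "(y+z)^2 \<le> 2 * (y^2 + z^2)" using amgm2[of 1 y z] by (simp add: power2_sum)
  have d: "2 * x * Y = s * (x * y + x * z)" by (simp add: Y_def algebra_simps)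
  show ?thesis using a b c d s2 unfolding s_def[symmetric] by simp
qed

lemma sub_sum_le: fixes \<sigma> :: "nat \<Rightarrow> real"
  assumes "A \<subseteq> {..<n}" shows "(\<Sum>p\<in>A. \<sigma> p^2) \<le> (\<Sum>p<n. \<sigma> p^2)"
  using assms by (intro sum_mono2) auto

lemma tri_bound: fixes \<sigma> :: "nat \<Rightarrow> real"
  assumes "x < n" "y < n" "z < n" "x \<noteq> y" "x \<noteq> z" "y \<noteq> z"
  shows "sqrt 2 * (\<sigma> x * \<sigma> y + \<sigma> x * \<sigma> z) \<le> (\<Sum>p<n. \<sigma> p^2)"
proof -
  have "(\<Sum>p\<in>{x,y,z}. \<sigma> p^2) \<le> (\<Sum>p<n. \<sigma> p^2)" using assms by (intro sub_sum_le) auto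
  moreover have "(\<Sum>p\<in>{x,y,z}. \<sigma> p^2) = \<sigma> x^2 + \<sigma> y^2 + \<sigma> z^2" using assms by simp
  ultimately show ?thesis using tri_ineq[of "\<sigma> x" "\<sigma> y" "\<sigma> z"] by linarith
qed

lemma quad_bound: fixes \<sigma> :: "nat \<Rightarrow> real"
  assumes "a < n" "b < n" "c < n" "d < n" "distinct [a,b,c,d]"
  shows "sqrt 2 * (\<sigma> a * \<sigma> b + \<sigma> c * \<sigma> d) \<le> (\<Sum>p<n. \<sigma> p^2)"
proof -
  have "(\<Sum>p\<in>{a,b,c,d}. \<sigma> p^2) \<le> (\<Sum>p<n. \<sigma> p^2)" using assms by (intro sub_sum_le) auto
  moreover have "(\<Sum>p\<in>{a,b,c,d}. \<sigma> p^2) = \<sigma> a^2 + \<sigma> b^2 + \<sigma> c^2 + \<sigma> d^2" using assms by simp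
  moreover have "2 * (\<sigma> a * \<sigma> b + \<sigma> c * \<sigma> d) \<le> \<sigma> a^2 + \<sigma> b^2 + \<sigma> c^2 + \<sigma> d^2"
    using amgm2[of 1 "\<sigma> a" "\<sigma> b"] amgm2[of 1 "\<sigma> c" "\<sigma> d"] by simp
  moreover have "sqrt 2 * (\<sigma> a * \<sigma> b + \<sigma> c * \<sigma> d) \<le> 2 * (\<sigma> a * \<sigma> b + \<sigma> c * \<sigma> d)" if "0 \<le> \<sigma> a * \<sigma> b + \<sigma> c * \<sigma> d"
  proof -
    have "sqrt (2::real) \<le> sqrt 4" by (rule real_sqrt_le_mono) simp
    then have "sqrt (2::real) \<le> 2" by simp
    then show ?thesis using that by (rule mult_right_mono)
  qed
  moreover have "sqrt 2 * (\<sigma> a * \<sigma> b + \<sigma> c * \<sigma> d) \<le> 0" if "\<sigma> a * \<sigma> b + \<sigma> c * \<sigma> d < 0"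
    using that by (simp add: mult_nonneg_nonpos)
  moreover have "0 \<le> \<sigma> a^2 + \<sigma> b^2 + \<sigma> c^2 + \<sigma> d^2" by simp
  ultimately show ?thesis by linarith
qed

lemma two_edges: fixes \<sigma> :: "nat \<Rightarrow> real"
  assumes "a < n" "b < n" "c < n" "d < n" "a \<noteq> b" "c \<noteq> d" "\<not> (c = a \<and> d = b)" "\<not> (c = b \<and> d = a)"
  shows "sqrt 2 * (\<sigma> a * \<sigma> b + \<sigma> c * \<sigma> d) \<le> (\<Sum>p<n. \<sigma> p^2)"
proof -
  have "c = a \<or> c = b \<or> d = a \<or> d = b \<or> distinct [a,b,c,d]" using assms by auto
  then consider "c = a" | "c = b" | "d = a" | "d = b" | "distinct [a,b,c,d]" by blast
  then show ?thesis
  proof cases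
    case 1 then show ?thesis using tri_bound[of a n b d \<sigma>] assms by auto
  next
    case 2 then show ?thesis using tri_bound[of b n a d \<sigma>] assms by (auto simp: mult.commute)
  next
    case 3 then show ?thesis using tri_bound[of a n b c \<sigma>] assms by (auto simp: mult.commute)
  next
    case 4 then show ?thesis using tri_bound[of b n a c \<sigma>] assms by (auto simp: mult.commute)
  next
    case 5 then show ?thesis using quad_bound[of a n b c d \<sigma>] assms by auto
  qed
qed

lemma finite_argmax: fixes f :: "'a \<Rightarrow> real"
  assumes "finite A" "A \<noteq> {}" shows "\<exists>x\<in>A. \<forall>y\<in>A. f y \<le> f x"
proof -
  have "Max (f ` A) \<in> f ` A" using assms by (intro Max_in) auto
  then obtain x where x: "x \<in> A" "f x = Max (f ` A)" by auto
  have "\<forall>y\<in>A. f y \<le> f x" using Max_ge[of "f ` A"] assms x by auto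
  then show ?thesis using x by blast
qed

lemma opt2:
  fixes \<sigma> :: "nat \<Rightarrow> real" and T :: "nat \<Rightarrow> nat \<Rightarrow> real"
  assumes sym: "\<And>p q. p < n \<Longrightarrow> q < n \<Longrightarrow> T p q = T q p"
    and nn: "\<And>p q. p < n \<Longrightarrow> q < n \<Longrightarrow> 0 \<le> T p q"
    and le1: "\<And>p q. p < n \<Longrightarrow> q < n \<Longrightarrow> T p q \<le> 1"
    and diag: "\<And>p. p < n \<Longrightarrow> T p p = 0"
    and tot: "(\<Sum>p<n. \<Sum>q<n. T p q) \<le> 4"
    and snn: "\<And>p. p < n \<Longrightarrow> 0 \<le> \<sigma> p"
  shows "(\<Sum>p<n. \<Sum>q<n. T p q * \<sigma> p * \<sigma> q) \<le> sqrt 2 * (\<Sum>p<n. \<sigma> p^2)"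
proof -
  define Od where "Od = {(p,q). p < n \<and> q < n \<and> p \<noteq> q}"
  define w where "w e = \<sigma> (fst e) * \<sigma> (snd e)" for e
  define t where "t e = T (fst e) (snd e)" for e
  have finO: "finite Od" unfolding Od_def by (rule finite_subset[of _ "{..<n} \<times> {..<n}"]) auto
  have conv: "(\<Sum>p<n. \<Sum>q<n. g p q) = (\<Sum>e\<in>Od. g (fst e) (snd e))" if "\<And>p. p < n \<Longrightarrow> g p p = 0" for g :: "nat \<Rightarrow> nat \<Rightarrow> real"
  proof -
    have "(\<Sum>p<n. \<Sum>q<n. g p q) = (\<Sum>e\<in>{..<n} \<times> {..<n}. g (fst e) (snd e))"
      by (simp add: sum.cartesian_product case_prod_beta)
    also have "\<dots> = (\<Sum>e\<in>Od. g (fst e) (snd e))"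
      using that by (intro sum.mono_neutral_right) (auto simp: Od_def)
    finally show ?thesis .
  qed
  have F: "(\<Sum>p<n. \<Sum>q<n. T p q * \<sigma> p * \<sigma> q) = (\<Sum>e\<in>Od. t e * w e)"
    using conv[of "\<lambda>p q. T p q * \<sigma> p * \<sigma> q"] diag by (simp add: t_def w_def mult.assoc)
  have totO: "(\<Sum>e\<in>Od. t e) \<le> 4" using conv[of T] diag tot by (simp add: t_def)
  have tO: "0 \<le> t e" "t e \<le> 1" if "e \<in> Od" for e using that nn le1 by (auto simp: Od_def t_def)
  have S0: "0 \<le> (\<Sum>p<n. \<sigma> p^2)" by (simp add: sum_nonneg)
  show ?thesis
  proof (cases "Od = {}")
    case True
    then show ?thesis unfolding F using S0 by simp
  next
    case False
    obtain e1 where e1: "e1 \<in> Od" "\<forall>e\<in>Od. w e \<le> w e1" using finite_argmax[OF finO False] by blast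
    obtain a b where ab: "e1 = (a,b)" by (cases e1)
    have ab': "a < n" "b < n" "a \<noteq> b" using e1 ab by (auto simp: Od_def)
    define H where "H = {(a,b),(b,a)}"
    have HO: "H \<subseteq> Od" using ab' by (auto simp: H_def Od_def)
    have wba: "w (b,a) = w (a,b)" by (simp add: w_def mult.commute)
    have sumH: "(\<Sum>e\<in>H. g e) = g (a,b) + g (b,a)" for g :: "nat \<times> nat \<Rightarrow> real"
      using ab' by (simp add: H_def)
    have splitO: "(\<Sum>e\<in>Od. g e) = (\<Sum>e\<in>Od - H. g e) + (\<Sum>e\<in>H. g e)" for g :: "nat \<times> nat \<Rightarrow> real"
      by (rule sum.subset_diff[OF HO finO])
    show ?thesis
    proof (cases "Od - H = {}")
      case True
      have "(\<Sum>e\<in>Od. t e * w e) = t (a,b) * w (a,b) + t (b,a) * w (b,a)"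
        using splitO[of "\<lambda>e. t e * w e"] True sumH by simp
      also have "\<dots> \<le> 1 * w (a,b) + 1 * w (b,a)"
        using tO[of "(a,b)"] tO[of "(b,a)"] HO snn ab'
        by (intro add_mono mult_right_mono) (auto simp: H_def w_def)
      also have "\<dots> = 2 * (\<sigma> a * \<sigma> b)" using wba by (simp add: w_def)
      also have "\<dots> \<le> \<sigma> a^2 + \<sigma> b^2" using amgm2[of 1 "\<sigma> a" "\<sigma> b"] by simp
      also have "\<dots> = (\<Sum>p\<in>{a,b}. \<sigma> p^2)" using ab' by simp
      also have "\<dots> \<le> (\<Sum>p<n. \<sigma> p^2)" using ab' by (intro sub_sum_le) auto
      also have "\<dots> \<le> sqrt 2 * (\<Sum>p<n. \<sigma> p^2)"
      proof -
        have "(1::real) \<le> sqrt 2" by simp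
        then show ?thesis using S0 mult_right_mono[of 1 "sqrt 2" "\<Sum>p<n. \<sigma> p^2"] by simp
      qed
      finally show ?thesis unfolding F .
    next
      case False
      obtain e2 where e2: "e2 \<in> Od - H" "\<forall>e\<in>Od - H. w e \<le> w e2"
        using finite_argmax[OF _ False] finO by blast
      obtain c d where cd: "e2 = (c,d)" by (cases e2)
      have cd': "c < n" "d < n" "c \<noteq> d" "\<not> (c = a \<and> d = b)" "\<not> (c = b \<and> d = a)"
        using e2 cd by (auto simp: Od_def H_def)
      define \<theta> where "\<theta> = w (c,d)"
      have th0: "0 \<le> \<theta>" using snn cd' by (simp add: \<theta>_def w_def)
      have thab: "\<theta> \<le> w (a,b)" using e1 e2 cd ab by (auto simp: \<theta>_def)
      have "(\<Sum>e\<in>Od. t e * w e) = (\<Sum>e\<in>Od. t e * (w e - \<theta>)) + \<theta> * (\<Sum>e\<in>Od. t e)"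
        by (simp add: algebra_simps sum.distrib sum_distrib_left sum_subtractf)
      also have "(\<Sum>e\<in>Od. t e * (w e - \<theta>)) = (\<Sum>e\<in>Od - H. t e * (w e - \<theta>)) + (\<Sum>e\<in>H. t e * (w e - \<theta>))"
        by (rule splitO)
      also have "(\<Sum>e\<in>Od - H. t e * (w e - \<theta>)) \<le> 0"
        using e2 cd tO by (intro sum_nonpos) (auto simp: \<theta>_def intro: mult_nonneg_nonpos)
      also have "(\<Sum>e\<in>H. t e * (w e - \<theta>)) \<le> (\<Sum>e\<in>H. 1 * (w e - \<theta>))"
        using tO HO thab wba by (intro sum_mono mult_right_mono) (auto simp: H_def)
      also have "(\<Sum>e\<in>H. 1 * (w e - \<theta>)) = 2 * (w (a,b) - \<theta>)" using sumH wba by simp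
      also have "\<theta> * (\<Sum>e\<in>Od. t e) \<le> \<theta> * 4" using th0 totO by (intro mult_left_mono)
      finally have "(\<Sum>e\<in>Od. t e * w e) \<le> 2 * (\<sigma> a * \<sigma> b + \<sigma> c * \<sigma> d)"
        by (simp add: \<theta>_def w_def)
      also have "\<dots> \<le> 2 * ((\<Sum>p<n. \<sigma> p^2) / sqrt 2)"
        using two_edges[of a n b c d \<sigma>] ab' cd' by (simp add: field_simps)
      also have "\<dots> = sqrt 2 * (\<Sum>p<n. \<sigma> p^2)"
        by (simp add: field_simps)
      finally show ?thesis unfolding F .
    qed
  qed
qed


definition ip :: "nat \<Rightarrow> (nat \<Rightarrow> complex) \<Rightarrow> (nat \<Rightarrow> complex) \<Rightarrow> complex" where
  "ip N x y = (\<Sum>a<N. cnj (x a) * y a)"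

lemma ip_cnj: "cnj (ip N x y) = ip N y x"
  by (simp add: ip_def cnj_sum mult.commute)

lemma ip_sum_right: "ip N x (\<lambda>a. \<Sum>j\<in>J. f j * y j a) = (\<Sum>j\<in>J. f j * ip N x (y j))"
proof -
  have "ip N x (\<lambda>a. \<Sum>j\<in>J. f j * y j a) = (\<Sum>a<N. \<Sum>j\<in>J. f j * (cnj (x a) * y j a))"
    unfolding ip_def by (simp add: sum_distrib_left mult.left_commute)
  also have "\<dots> = (\<Sum>j\<in>J. \<Sum>a<N. f j * (cnj (x a) * y j a))" by (rule sum.swap)
  also have "\<dots> = (\<Sum>j\<in>J. f j * ip N x (y j))" unfolding ip_def by (simp add: sum_distrib_left)
  finally show ?thesis .
qed

lemma ip_sum_left: "ip N (\<lambda>a. \<Sum>j\<in>J. f j * y j a) x = (\<Sum>j\<in>J. cnj (f j) * ip N (y j) x)"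
proof -
  have "ip N (\<lambda>a. \<Sum>j\<in>J. f j * y j a) x = cnj (ip N x (\<lambda>a. \<Sum>j\<in>J. f j * y j a))"
    by (rule ip_cnj[symmetric])
  also have "\<dots> = (\<Sum>j\<in>J. cnj (f j) * ip N (y j) x)"
    unfolding ip_sum_right cnj_sum by (simp add: ip_cnj)
  finally show ?thesis .
qed

lemma ip_diff_left: "ip N (\<lambda>a. x a - y a) z = ip N x z - ip N y z"
  unfolding ip_def by (simp add: algebra_simps sum_subtractf)

lemma ip_diff_right: "ip N z (\<lambda>a. x a - y a) = ip N z x - ip N z y"
  unfolding ip_def by (simp add: algebra_simps sum_subtractf)

lemma ip_self: "ip N z z = complex_of_real (\<Sum>a<N. (cmod (z a))^2)"
  unfolding ip_def by (simp add: of_real_sum mult.commute mult_cnj_real)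

lemma ip_self_nonneg: "0 \<le> Re (ip N z z)"
  unfolding ip_self by (simp add: sum_nonneg)

lemma bessel:
  fixes e :: "'i \<Rightarrow> nat \<Rightarrow> complex"
  assumes fin: "finite I" and orth: "\<And>i j. i \<in> I \<Longrightarrow> j \<in> I \<Longrightarrow> ip N (e i) (e j) = (if i = j then 1 else 0)"
  shows "(\<Sum>i\<in>I. (cmod (ip N (e i) z))^2) \<le> Re (ip N z z)"
proof -
  define c where "c i = ip N (e i) z" for i
  define s where "s a = (\<Sum>i\<in>I. c i * e i a)" for a
  have zs: "ip N z s = (\<Sum>i\<in>I. c i * cnj (c i))"
  proof -
    have "ip N z s = (\<Sum>i\<in>I. c i * ip N z (e i))" unfolding s_def by (rule ip_sum_right)
    also have "\<dots> = (\<Sum>i\<in>I. c i * cnj (c i))" unfolding c_def by (simp add: ip_cnj)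
    finally show ?thesis .
  qed
  have sz: "ip N s z = (\<Sum>i\<in>I. cnj (c i) * c i)"
    unfolding s_def by (simp add: ip_sum_left c_def)
  have ss: "ip N s s = (\<Sum>i\<in>I. cnj (c i) * c i)"
  proof -
    have "ip N s s = (\<Sum>i\<in>I. cnj (c i) * ip N (e i) s)"
      unfolding s_def[abs_def] by (simp add: ip_sum_left)
    also have "\<dots> = (\<Sum>i\<in>I. cnj (c i) * (\<Sum>j\<in>I. c j * ip N (e i) (e j)))"
      unfolding s_def by (simp add: ip_sum_right)
    also have "\<dots> = (\<Sum>i\<in>I. cnj (c i) * c i)"
    proof (intro sum.cong refl)
      fix i assume i: "i \<in> I"
      have "(\<Sum>j\<in>I. c j * ip N (e i) (e j)) = (\<Sum>j\<in>I. if j = i then c j else 0)"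
        using i orth by (intro sum.cong) auto
      also have "\<dots> = c i" using fin i by simp
      finally show "cnj (c i) * (\<Sum>j\<in>I. c j * ip N (e i) (e j)) = cnj (c i) * c i" by simp
    qed
    finally show ?thesis .
  qed
  have "ip N (\<lambda>a. z a - s a) (\<lambda>a. z a - s a) = ip N z z - ip N z s - (ip N s z - ip N s s)"
    by (simp add: ip_diff_left ip_diff_right)
  also have "\<dots> = ip N z z - (\<Sum>i\<in>I. c i * cnj (c i))"
    using zs sz ss by (simp add: mult.commute)
  finally have eq: "ip N (\<lambda>a. z a - s a) (\<lambda>a. z a - s a) = ip N z z - (\<Sum>i\<in>I. c i * cnj (c i))" .
  have "Re (\<Sum>i\<in>I. c i * cnj (c i)) = (\<Sum>i\<in>I. (cmod (c i))^2)"
    by (simp add: mult_cnj_real)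
  then show ?thesis using ip_self_nonneg[of N "\<lambda>a. z a - s a"] unfolding eq c_def by simp
qed


lemma cmod_sq_expand: fixes \<alpha> \<beta> x y :: complex
  shows "(cmod (\<alpha> * cnj x + \<beta> * cnj y))^2 = (cmod \<alpha>)^2 * (cmod x)^2 + (cmod \<beta>)^2 * (cmod y)^2 + 2 * Re (\<alpha> * cnj \<beta> * (cnj x * y))"
  by (simp only: cmod_power2) (simp add: power2_eq_square algebra_simps)

lemma pair_ab:
  fixes a b :: "nat \<Rightarrow> complex" and X Y :: real
  assumes X: "0 \<le> X" and Y: "0 \<le> Y"
    and H: "\<And>\<alpha> \<beta>. (\<Sum>t<r. (cmod (\<alpha> * cnj (a t) + \<beta> * cnj (b t)))^2) \<le> (cmod \<alpha>)^2 * X + (cmod \<beta>)^2 * Y"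
  defines "dx \<equiv> \<Sum>t<r. (cmod (a t))^2" and "dy \<equiv> \<Sum>t<r. (cmod (b t))^2" and "M \<equiv> \<Sum>t<r. cnj (a t) * b t"
  shows "dx \<le> X" "dy \<le> Y" "2 * sqrt X * sqrt Y * cmod M \<le> Y * dx + X * dy"
        "Y * dx + X * dy + 2 * sqrt X * sqrt Y * cmod M \<le> 2 * X * Y"
        "X = 0 \<Longrightarrow> M = 0" "Y = 0 \<Longrightarrow> M = 0"
proof -
  have exp: "(\<Sum>t<r. (cmod (\<alpha> * cnj (a t) + \<beta> * cnj (b t)))^2) = (cmod \<alpha>)^2 * dx + (cmod \<beta>)^2 * dy + 2 * Re (\<alpha> * cnj \<beta> * M)" for \<alpha> \<beta>
    unfolding cmod_sq_expand dx_def dy_def M_def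
    by (simp add: sum.distrib sum_distrib_left Re_sum)
  define \<phi> where "\<phi> = (if M = 0 then 1 else M / complex_of_real (cmod M))"
  have phi1: "cmod \<phi> = 1" by (simp add: \<phi>_def norm_divide)
  have phiM: "cnj \<phi> * M = complex_of_real (cmod M)"
  proof (cases "M = 0")
    case False
    have "cnj M * M = complex_of_real (cmod M) * complex_of_real (cmod M)"
      by (simp add: mult.commute mult_cnj_real power2_eq_square)
    then show ?thesis using False by (simp add: \<phi>_def field_simps)
  qed (simp add: \<phi>_def)
  have dx0: "0 \<le> dx" "0 \<le> dy" by (simp_all add: dx_def dy_def sum_nonneg)
  show "dx \<le> X" using H[of 1 0] exp[of 1 0] by simp
  show "dy \<le> Y" using H[of 0 1] exp[of 0 1] by simp
  have sX: "(cmod (complex_of_real (sqrt X)))^2 = X" using X by simp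
  have sY: "(cmod (complex_of_real (sqrt Y)))^2 = Y" using Y by simp
  have cross: "Re (complex_of_real (sqrt Y) * cnj (s * complex_of_real (sqrt X) * \<phi>) * M) = s * sqrt X * sqrt Y * cmod M" if "s = 1 \<or> s = -1" for s :: real
  proof -
    have "complex_of_real (sqrt Y) * cnj (s * complex_of_real (sqrt X) * \<phi>) * M = complex_of_real (s * sqrt X * sqrt Y) * (cnj \<phi> * M)"
      by (simp add: mult_ac)
    then have "Re (complex_of_real (sqrt Y) * cnj (s * complex_of_real (sqrt X) * \<phi>) * M) = Re (complex_of_real (s * sqrt X * sqrt Y) * (cnj \<phi> * M))"
      by (rule arg_cong)
    also have "\<dots> = Re (complex_of_real (s * sqrt X * sqrt Y) * complex_of_real (cmod M))"
      unfolding phiM by (rule refl)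
    also have "\<dots> = s * sqrt X * sqrt Y * cmod M" by simp
    finally show ?thesis .
  qed
  have n1: "(cmod (complex_of_real s * complex_of_real (sqrt X) * \<phi>))^2 = X" if "s = 1 \<or> s = -1" for s :: real
    using that X phi1 by (auto simp: norm_mult)
  have up: "(\<Sum>t<r. (cmod (complex_of_real (sqrt Y) * cnj (a t) + (1 * complex_of_real (sqrt X) * \<phi>) * cnj (b t)))^2) \<le> Y * X + X * Y"
    using H[of "complex_of_real (sqrt Y)" "1 * complex_of_real (sqrt X) * \<phi>"] sY n1[of 1] by simp
  then show "Y * dx + X * dy + 2 * sqrt X * sqrt Y * cmod M \<le> 2 * X * Y"
    unfolding exp sY using n1[of 1] cross[of 1] by simp
  have "0 \<le> (\<Sum>t<r. (cmod (complex_of_real (sqrt Y) * cnj (a t) + (complex_of_real (-1) * complex_of_real (sqrt X) * \<phi>) * cnj (b t)))^2)"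
    by (simp add: sum_nonneg)
  then show "2 * sqrt X * sqrt Y * cmod M \<le> Y * dx + X * dy"
    unfolding exp sY using n1[of "-1"] cross[of "-1"] by simp
  show "M = 0" if "X = 0"
  proof -
    have "dx = 0" using that \<open>dx \<le> X\<close>[unfolded that] dx0 H[of 1 0] exp[of 1 0] by simp
    then have "\<forall>t\<in>{..<r}. (cmod (a t))^2 = 0" unfolding dx_def by (subst (asm) sum_nonneg_eq_0_iff) auto
    then show ?thesis unfolding M_def by simp
  qed
  show "M = 0" if "Y = 0"
  proof -
    have "dy = 0" using that H[of 0 1] exp[of 0 1] dx0 by simp
    then have "\<forall>t\<in>{..<r}. (cmod (b t))^2 = 0" unfolding dy_def by (subst (asm) sum_nonneg_eq_0_iff) auto
    then show ?thesis unfolding M_def by simp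
  qed
qed


lemma sum_split: fixes m n :: nat shows "(\<Sum>a<m*n. f a) = (\<Sum>i<m. \<Sum>j<n. f (i*n+j))"
proof -
  have "(\<Sum>a<m*n. f a) = (\<Sum>i<m. sum f {i*n..<i*n+n})" by (rule sum.nat_group[symmetric])
  also have "\<dots> = (\<Sum>i<m. \<Sum>j<n. f (i*n+j))"
  proof (rule sum.cong[OF refl])
    fix i assume "i \<in> {..<m}"
    have "sum f {i*n..<i*n+n} = sum (f \<circ> plus (i*n)) {0..<i*n+n-i*n}" by (rule sum.atLeastLessThan_shift_0)
    then show "sum f {i*n..<i*n+n} = (\<Sum>j<n. f (i*n+j))" by (simp add: atLeast0LessThan)
  qed
  finally show ?thesis .
qed

lemma divmod_aux: fixes i j n :: nat shows "j < n \<Longrightarrow> (i*n+j) div n = i" "j < n \<Longrightarrow> (i*n+j) mod n = j"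
  by (simp_all add: add.commute[of "i*n" j])

lemma sum4_swap: "(\<Sum>p\<in>P. \<Sum>q\<in>Q. \<Sum>i\<in>I. \<Sum>k\<in>K. f p q i k) = (\<Sum>i\<in>I. \<Sum>k\<in>K. \<Sum>p\<in>P. \<Sum>q\<in>Q. f p q i k)"
proof -
  have "(\<Sum>p\<in>P. \<Sum>q\<in>Q. \<Sum>i\<in>I. \<Sum>k\<in>K. f p q i k) = (\<Sum>p\<in>P. \<Sum>i\<in>I. \<Sum>q\<in>Q. \<Sum>k\<in>K. f p q i k)"
    by (intro sum.cong refl sum.swap)
  also have "\<dots> = (\<Sum>i\<in>I. \<Sum>p\<in>P. \<Sum>q\<in>Q. \<Sum>k\<in>K. f p q i k)" by (rule sum.swap)
  also have "\<dots> = (\<Sum>i\<in>I. \<Sum>p\<in>P. \<Sum>k\<in>K. \<Sum>q\<in>Q. f p q i k)"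
    by (intro sum.cong refl sum.swap)
  also have "\<dots> = (\<Sum>i\<in>I. \<Sum>k\<in>K. \<Sum>p\<in>P. \<Sum>q\<in>Q. f p q i k)"
    by (intro sum.cong refl sum.swap)
  finally show ?thesis .
qed

definition cc :: "nat \<Rightarrow> nat \<Rightarrow> nat \<Rightarrow> nat" where "cc n a b = (b div n) * n + a mod n"
definition dd :: "nat \<Rightarrow> nat \<Rightarrow> nat \<Rightarrow> nat" where "dd n a b = (a div n) * n + b mod n"

definition Gf :: "nat \<Rightarrow> nat \<Rightarrow> (nat \<Rightarrow> complex) \<Rightarrow> (nat \<Rightarrow> complex) \<Rightarrow> complex" where
  "Gf m n v u = (\<Sum>a<m*n. \<Sum>b<m*n. cnj (v a) * u (cc n a b) * cnj (u (dd n a b)) * v b)"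

definition om :: "nat \<Rightarrow> nat \<Rightarrow> (nat \<Rightarrow> nat \<Rightarrow> complex) \<Rightarrow> (nat \<Rightarrow> nat \<Rightarrow> complex) \<Rightarrow> nat \<Rightarrow> nat \<Rightarrow> (nat \<Rightarrow> complex) \<Rightarrow> complex" where
  "om m n A C p q u = (\<Sum>i<m. \<Sum>l<n. A i p * C l q * u (i*n+l))"

lemma G_omega:
  assumes S1: "\<And>i j. i < m \<Longrightarrow> j < n \<Longrightarrow> v (i*n+j) = (\<Sum>p<n. A i p * cnj (C j p))"
  shows "Gf m n v u = (\<Sum>p<n. \<Sum>q<n. cnj (om m n A C p q u) * om m n A C q p u)"
proof -
  define Y where "Y k p = (\<Sum>l<n. u (k*n+l) * C l p)" for k p
  define B where "B i k = (\<Sum>j<n. cnj (v (i*n+j)) * u (k*n+j))" for i k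
  have step1: "Gf m n v u = (\<Sum>i<m. \<Sum>j<n. \<Sum>k<m. \<Sum>l<n. cnj (v (i*n+j)) * u (k*n+j) * cnj (u (i*n+l)) * v (k*n+l))"
    unfolding Gf_def sum_split[of _ m n] by (simp add: cc_def dd_def divmod_aux)
  also have "\<dots> = (\<Sum>i<m. \<Sum>k<m. \<Sum>j<n. \<Sum>l<n. cnj (v (i*n+j)) * u (k*n+j) * cnj (u (i*n+l)) * v (k*n+l))"
    by (intro sum.cong refl sum.swap)
  also have "\<dots> = (\<Sum>i<m. \<Sum>k<m. B i k * cnj (B k i))"
  proof (intro sum.cong refl)
    fix i k
    have "cnj (B k i) = (\<Sum>l<n. cnj (u (i*n+l)) * v (k*n+l))" by (simp add: B_def cnj_sum mult.commute)
    then show "(\<Sum>j<n. \<Sum>l<n. cnj (v (i*n+j)) * u (k*n+j) * cnj (u (i*n+l)) * v (k*n+l)) = B i k * cnj (B k i)"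
      by (simp add: B_def sum_product mult.assoc)
  qed
  also have "\<dots> = (\<Sum>i<m. \<Sum>k<m. (\<Sum>p<n. cnj (A i p) * Y k p) * cnj (\<Sum>q<n. cnj (A k q) * Y i q))"
  proof -
    have B: "B i k = (\<Sum>p<n. cnj (A i p) * Y k p)" if "i < m" for i k
    proof -
      have "B i k = (\<Sum>j<n. \<Sum>p<n. cnj (A i p) * C j p * u (k*n+j))"
        unfolding B_def using that by (intro sum.cong refl) (simp add: S1 cnj_sum sum_distrib_right)
      also have "\<dots> = (\<Sum>p<n. \<Sum>j<n. cnj (A i p) * C j p * u (k*n+j))" by (rule sum.swap)
      also have "\<dots> = (\<Sum>p<n. cnj (A i p) * Y k p)"
        unfolding Y_def by (simp add: sum_distrib_left mult_ac)
      finally show ?thesis .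
    qed
    show ?thesis by (intro sum.cong refl) (simp add: B)
  qed
  also have "\<dots> = (\<Sum>i<m. \<Sum>k<m. \<Sum>p<n. \<Sum>q<n. cnj (A i p) * Y k p * (A k q * cnj (Y i q)))"
    by (simp add: cnj_sum sum_product)
  also have "\<dots> = (\<Sum>p<n. \<Sum>q<n. \<Sum>i<m. \<Sum>k<m. cnj (A i p) * Y k p * (A k q * cnj (Y i q)))"
    by (rule sum4_swap[symmetric])
  also have "\<dots> = (\<Sum>p<n. \<Sum>q<n. cnj (om m n A C p q u) * om m n A C q p u)"
  proof (intro sum.cong refl)
    fix p q
    have om1: "om m n A C p q u = (\<Sum>i<m. A i p * Y i q)" for p q
      unfolding om_def Y_def by (simp add: sum_distrib_left mult_ac)
    show "(\<Sum>i<m. \<Sum>k<m. cnj (A i p) * Y k p * (A k q * cnj (Y i q))) = cnj (om m n A C p q u) * om m n A C q p u"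
    proof -
      have "cnj (\<Sum>i<m. A i p * Y i q) * (\<Sum>k<m. A k q * Y k p) = (\<Sum>i<m. cnj (A i p * Y i q)) * (\<Sum>k<m. A k q * Y k p)"
        by (simp only: cnj_sum)
      also have "\<dots> = (\<Sum>i<m. \<Sum>k<m. cnj (A i p * Y i q) * (A k q * Y k p))" by (rule sum_product)
      also have "\<dots> = (\<Sum>i<m. \<Sum>k<m. cnj (A i p) * Y k p * (A k q * cnj (Y i q)))" by (simp add: mult_ac)
      finally show ?thesis unfolding om1 by simp
    qed
  qed
  finally show ?thesis .
qed


lemma schmidt:
  fixes v :: "nat \<Rightarrow> complex" and m n :: nat
  shows "\<exists>A C. (\<forall>i<m. \<forall>j<n. v (i*n+j) = (\<Sum>p<n. A i p * cnj (C j p)))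
     \<and> (\<forall>p<n. \<forall>q<n. p \<noteq> q \<longrightarrow> (\<Sum>i<m. cnj (A i p) * A i q) = 0)
     \<and> (\<forall>p<n. \<forall>q<n. (\<Sum>l<n. cnj (C l p) * C l q) = (if p = q then 1 else 0))"
proof -
  define V where "V = mat m n (\<lambda>(i,j). v (i*n+j))"
  have Vc: "V \<in> carrier_mat m n" by (simp add: V_def)
  have aVc: "adjoint_mat V \<in> carrier_mat n m" using Vc by simp
  define K where "K = adjoint_mat V * V"
  have Kc: "K \<in> carrier_mat n n" unfolding K_def by (rule mult_carrier_mat[OF aVc Vc])
  have hK: "adjoint_mat K = K" unfolding K_def by (simp add: adjoint_mult[OF aVc Vc])
  obtain C where C: "unitary_mat n C" and offd: "\<forall>i<n. \<forall>j<n. i \<noteq> j \<longrightarrow> (adjoint_mat C * K * C) $$ (i,j) = 0"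
    using spectral[OF Kc hK] by auto
  have Cc: "C \<in> carrier_mat n n" and CC: "C * adjoint_mat C = 1\<^sub>m n" and CC2: "adjoint_mat C * C = 1\<^sub>m n"
    using C unfolding unitary_mat_def by auto
  have aCc: "adjoint_mat C \<in> carrier_mat n n" using Cc by simp
  define A where "A = V * C"
  have Ac: "A \<in> carrier_mat m n" unfolding A_def by (rule mult_carrier_mat[OF Vc Cc])
  have "A * adjoint_mat C = V * (C * adjoint_mat C)" unfolding A_def by (rule assoc_mult_mat[OF Vc Cc aCc])
  also have "\<dots> = V" unfolding CC using Vc by simp
  finally have VA: "V = A * adjoint_mat C" by simp
  have S1: "v (i*n+j) = (\<Sum>p<n. A $$ (i,p) * cnj (C $$ (j,p)))" if "i < m" "j < n" for i j
  proof -
    have "v (i*n+j) = V $$ (i,j)" using that by (simp add: V_def)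
    also have "\<dots> = (A * adjoint_mat C) $$ (i,j)" using VA by simp
    also have "\<dots> = (\<Sum>p<n. A $$ (i,p) * cnj (C $$ (j,p)))"
      using that Ac Cc by (simp add: scalar_prod_def atLeast0LessThan)
    finally show ?thesis .
  qed
  have "adjoint_mat A * A = adjoint_mat C * adjoint_mat V * (V * C)"
    unfolding A_def by (simp add: adjoint_mult[OF Vc Cc])
  also have "\<dots> = adjoint_mat C * (adjoint_mat V * (V * C))"
    by (rule assoc_mult_mat[OF aCc aVc mult_carrier_mat[OF Vc Cc]])
  also have "adjoint_mat V * (V * C) = K * C" unfolding K_def by (rule assoc_mult_mat[OF aVc Vc Cc, symmetric])
  also have "adjoint_mat C * (K * C) = adjoint_mat C * K * C" by (rule assoc_mult_mat[OF aCc Kc Cc, symmetric])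
  finally have AA: "adjoint_mat A * A = adjoint_mat C * K * C" .
  have S2: "(\<Sum>i<m. cnj (A $$ (i,p)) * A $$ (i,q)) = 0" if "p < n" "q < n" "p \<noteq> q" for p q
  proof -
    have "(\<Sum>i<m. cnj (A $$ (i,p)) * A $$ (i,q)) = (adjoint_mat A * A) $$ (p,q)"
      using that Ac by (simp add: scalar_prod_def atLeast0LessThan)
    then show ?thesis using AA offd that by simp
  qed
  have S3: "(\<Sum>l<n. cnj (C $$ (l,p)) * C $$ (l,q)) = (if p = q then 1 else 0)" if "p < n" "q < n" for p q
  proof -
    have "(\<Sum>l<n. cnj (C $$ (l,p)) * C $$ (l,q)) = (adjoint_mat C * C) $$ (p,q)"
      using that Cc by (simp add: scalar_prod_def atLeast0LessThan)
    then show ?thesis using CC2 that by simp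
  qed
  show ?thesis
    by (rule exI[of _ "\<lambda>i p. A $$ (i,p)"], rule exI[of _ "\<lambda>l q. C $$ (l,q)"]) (use S1 S2 S3 in auto)
qed


lemma ip_scale_left: "ip N (\<lambda>a. c * x a) y = cnj c * ip N x y"
  by (simp add: ip_def sum_distrib_left mult_ac)

lemma ip_scale_right: "ip N x (\<lambda>a. c * y a) = c * ip N x y"
  by (simp add: ip_def sum_distrib_left mult_ac)

lemma ip_lin_right: "ip N w (\<lambda>a. \<alpha> * x a + \<beta> * y a) = \<alpha> * ip N w x + \<beta> * ip N w y"
  by (simp add: ip_def sum_distrib_left sum.distrib algebra_simps)

lemma ip_lin2: "ip N (\<lambda>a. \<alpha> * x a + \<beta> * y a) (\<lambda>a. \<alpha> * x a + \<beta> * y a) =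
   cnj \<alpha> * \<alpha> * ip N x x + cnj \<alpha> * \<beta> * ip N x y + cnj \<beta> * \<alpha> * ip N y x + cnj \<beta> * \<beta> * ip N y y"
  by (simp add: ip_def sum_distrib_left sum.distrib algebra_simps)

lemma Gf_real: "Im (Gf m n v u) = 0"
proof -
  have "cnj (Gf m n v u) = (\<Sum>a<m*n. \<Sum>b<m*n. v a * cnj (u (cc n a b)) * u (dd n a b) * cnj (v b))"
    by (simp add: Gf_def cnj_sum)
  also have "\<dots> = (\<Sum>b<m*n. \<Sum>a<m*n. v a * cnj (u (cc n a b)) * u (dd n a b) * cnj (v b))"
    by (rule sum.swap)
  also have "\<dots> = Gf m n v u"
    unfolding Gf_def by (intro sum.cong refl) (simp add: cc_def dd_def mult_ac)
  finally have "cnj (Gf m n v u) = Gf m n v u" .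
  then show ?thesis by (metis Reals_cnj_iff complex_is_Real_iff)
qed


lemma core:
  fixes m n r :: nat and v :: "nat \<Rightarrow> complex" and u :: "nat \<Rightarrow> nat \<Rightarrow> complex"
  assumes orth: "\<And>s t. s < r \<Longrightarrow> t < r \<Longrightarrow> ip (m*n) (u s) (u t) = (if s = t then 1 else 0)"
  shows "\<exists>\<sigma> T. (\<forall>p<n. 0 \<le> \<sigma> p) \<and> (\<forall>p<n. \<forall>q<n. T p q = T q p \<and> 0 \<le> T p q \<and> T p q \<le> 1) \<and> (\<forall>p<n. T p p = 0)
     \<and> (\<Sum>p<n. \<Sum>q<n. T p q) \<le> 2 * real r \<and> (\<Sum>p<n. \<sigma> p^2) = Re (ip (m*n) v v)
     \<and> - Re (\<Sum>t<r. Gf m n v (u t)) \<le> (\<Sum>p<n. \<Sum>q<n. T p q * \<sigma> p * \<sigma> q) / 2"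
proof -
  obtain A C where SS: "(\<forall>i<m. \<forall>j<n. v (i*n+j) = (\<Sum>p<n. A i p * cnj (C j p)))
     \<and> (\<forall>p<n. \<forall>q<n. p \<noteq> q \<longrightarrow> (\<Sum>i<m. cnj (A i p) * A i q) = 0)
     \<and> (\<forall>p<n. \<forall>q<n. (\<Sum>l<n. cnj (C l p) * C l q) = (if p = q then 1 else 0))"
    using schmidt[of m n v] by (elim exE) (erule that)
  have S1: "\<And>i j. i < m \<Longrightarrow> j < n \<Longrightarrow> v (i*n+j) = (\<Sum>p<n. A i p * cnj (C j p))"
    using SS by simp
  have S2: "\<And>p q. p < n \<Longrightarrow> q < n \<Longrightarrow> p \<noteq> q \<Longrightarrow> (\<Sum>i<m. cnj (A i p) * A i q) = 0"
    using SS by simp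
  have S3: "\<And>p q. p < n \<Longrightarrow> q < n \<Longrightarrow> (\<Sum>l<n. cnj (C l p) * C l q) = (if p = q then 1 else 0)"
    using SS by simp
  define N where "N = m * n"
  define X where "X p = (\<Sum>i<m. (cmod (A i p))^2)" for p
  define \<sigma> where "\<sigma> p = sqrt (X p)" for p
  define x where "x p q a = cnj (A (a div n) p * C (a mod n) q)" for p q a
  have Xnn: "0 \<le> X p" for p unfolding X_def by (simp add: sum_nonneg)
  have sig2: "\<sigma> p ^ 2 = X p" for p using Xnn by (simp add: \<sigma>_def)
  have omx: "om m n A C p q w = ip N (x p q) w" for p q w
    unfolding om_def ip_def N_def x_def sum_split by (simp add: divmod_aux)
  have xx: "ip N (x p q) (x p' q') = (if p = p' \<and> q = q' then complex_of_real (X p) else 0)"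
    if "p < n" "q < n" "p' < n" "q' < n" for p q p' q'
  proof -
    have "ip N (x p q) (x p' q') = (\<Sum>i<m. \<Sum>l<n. (A i p * cnj (A i p')) * (C l q * cnj (C l q')))"
      unfolding ip_def N_def x_def sum_split by (simp add: divmod_aux mult_ac)
    also have "\<dots> = (\<Sum>i<m. A i p * cnj (A i p')) * (\<Sum>l<n. C l q * cnj (C l q'))"
      by (simp add: sum_product)
    also have "(\<Sum>l<n. C l q * cnj (C l q')) = cnj (\<Sum>l<n. cnj (C l q) * C l q')"
      by (simp add: cnj_sum mult.commute)
    also have "\<dots> = (if q = q' then 1 else 0)" using S3[OF that(2,4)] by simp
    also have "(\<Sum>i<m. A i p * cnj (A i p')) = (if p = p' then complex_of_real (X p) else 0)"
    proof (cases "p = p'")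
      case True
      then show ?thesis by (simp add: X_def mult_cnj_real of_real_sum)
    next
      case False
      have "(\<Sum>i<m. A i p * cnj (A i p')) = cnj (\<Sum>i<m. cnj (A i p) * A i p')"
        by (simp add: cnj_sum mult.commute)
      then show ?thesis using S2[OF that(1,3) False] False by simp
    qed
    finally show ?thesis by simp
  qed
  define a where "a p q t = ip N (x p q) (u t)" for p q t
  define d where "d p q = (\<Sum>t<r. (cmod (a p q t))^2)" for p q
  define M where "M p q = (\<Sum>t<r. cnj (a p q t) * a q p t)" for p q
  have orthN: "\<And>s t. s \<in> {..<r} \<Longrightarrow> t \<in> {..<r} \<Longrightarrow> ip N (u s) (u t) = (if s = t then 1 else 0)"
    using orth by (auto simp: N_def)
  have sumG: "(\<Sum>t<r. Gf m n v (u t)) = (\<Sum>p<n. \<Sum>q<n. M p q)"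
  proof -
    have "(\<Sum>t<r. Gf m n v (u t)) = (\<Sum>t<r. \<Sum>p<n. \<Sum>q<n. cnj (a p q t) * a q p t)"
      by (simp add: G_omega[where m=m and n=n and v=v and A=A and C=C, OF S1] omx a_def)
    also have "\<dots> = (\<Sum>p<n. \<Sum>t<r. \<Sum>q<n. cnj (a p q t) * a q p t)" by (rule sum.swap)
    also have "\<dots> = (\<Sum>p<n. \<Sum>q<n. \<Sum>t<r. cnj (a p q t) * a q p t)" by (intro sum.cong refl sum.swap)
    finally show ?thesis by (simp add: M_def)
  qed
  have dX: "d p q \<le> X p" if "p < n" "q < n" for p q
  proof -
    have "(\<Sum>t\<in>{..<r}. (cmod (ip N (u t) (x p q)))^2) \<le> Re (ip N (x p q) (x p q))"
      by (rule bessel[OF _ orthN]) auto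
    moreover have "cmod (ip N (u t) (x p q)) = cmod (a p q t)" for t
      unfolding a_def by (metis complex_mod_cnj ip_cnj)
    ultimately show ?thesis using xx[OF that that] by (simp add: d_def)
  qed
  have H: "(\<Sum>t<r. (cmod (\<alpha> * cnj (a p q t) + \<beta> * cnj (a q p t)))^2) \<le> (cmod \<alpha>)^2 * X p + (cmod \<beta>)^2 * X q"
    if pq: "p < n" "q < n" "p \<noteq> q" for p q \<alpha> \<beta>
  proof -
    define z where "z a' = \<alpha> * x p q a' + \<beta> * x q p a'" for a'
    have "(\<Sum>t\<in>{..<r}. (cmod (ip N (u t) z))^2) \<le> Re (ip N z z)"
      by (rule bessel[OF _ orthN]) auto
    moreover have "ip N (u t) z = \<alpha> * cnj (a p q t) + \<beta> * cnj (a q p t)" for t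
      unfolding z_def ip_lin_right a_def by (simp add: ip_cnj)
    moreover have "Re (ip N z z) = (cmod \<alpha>)^2 * X p + (cmod \<beta>)^2 * X q"
    proof -
      have "ip N z z = cnj \<alpha> * \<alpha> * complex_of_real (X p) + cnj \<beta> * \<beta> * complex_of_real (X q)"
        unfolding z_def ip_lin2 using xx pq by simp
      then show ?thesis by (simp add: mult.commute[of "cnj _"] mult_cnj_real)
    qed
    ultimately show ?thesis by simp
  qed
  define e where "e p q = (if X p = 0 then 0 else d p q / X p)" for p q
  have e01: "0 \<le> e p q" "e p q \<le> 1" if "p < n" "q < n" for p q
    using dX[OF that] Xnn[of p] by (auto simp: e_def d_def sum_nonneg field_simps)
  define T where "T p q = (if p = q then 0 else min (e p q + e q p) (2 - e p q - e q p))" for p q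
  have Tprops: "T p q = T q p \<and> 0 \<le> T p q \<and> T p q \<le> 1" if "p < n" "q < n" for p q
    using e01[OF that] e01[OF that(2,1)] by (auto simp: T_def)
  have Tdiag: "T p p = 0" for p by (simp add: T_def)
  have sum_e: "(\<Sum>p<n. \<Sum>q<n. e p q) \<le> real r"
  proof -
    define I where "I = {pq \<in> {..<n} \<times> {..<n}. X (fst pq) \<noteq> 0}"
    have finI: "finite I" unfolding I_def by (rule finite_subset[of _ "{..<n} \<times> {..<n}"]) auto
    define c where "c (pq::nat\<times>nat) = complex_of_real (1 / sqrt (X (fst pq)))" for pq
    define eh where "eh (pq::nat\<times>nat) a' = c pq * x (fst pq) (snd pq) a'" for pq a'
    have ehorth: "ip N (eh i) (eh j) = (if i = j then 1 else 0)" if "i \<in> I" "j \<in> I" for i j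
    proof -
      have "ip N (eh i) (eh j) = cnj (c i) * (c j * ip N (x (fst i) (snd i)) (x (fst j) (snd j)))"
        unfolding eh_def ip_scale_left ip_scale_right by simp
      also have "\<dots> = (if i = j then 1 else 0)"
      proof (cases "i = j")
        case True
        have X0: "X (fst i) > 0" using that Xnn[of "fst i"] by (auto simp: I_def)
        have "cnj (c i) * c i = complex_of_real (1 / X (fst i))"
          using X0 by (simp add: c_def real_sqrt_mult[symmetric] flip: of_real_mult)
        moreover have "ip N (x (fst i) (snd i)) (x (fst j) (snd j)) = complex_of_real (X (fst i))"
          using True that xx[of "fst i" "snd i" "fst i" "snd i"] by (auto simp: I_def)
        ultimately have "cnj (c i) * (c j * ip N (x (fst i) (snd i)) (x (fst j) (snd j))) = complex_of_real (1 / X (fst i)) * complex_of_real (X (fst i))"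
          using True by (simp only: mult.assoc[symmetric])
        then show ?thesis using True X0 by (simp flip: of_real_mult)
      next
        case False
        then have "\<not> (fst i = fst j \<and> snd i = snd j)" by (auto simp: prod_eq_iff)
        then show ?thesis using False that xx[of "fst i" "snd i" "fst j" "snd j"] by (auto simp: I_def)
      qed
      finally show ?thesis .
    qed
    have bt: "(\<Sum>pq\<in>I. (cmod (a (fst pq) (snd pq) t))^2 / X (fst pq)) \<le> 1" if t: "t < r" for t
    proof -
      have "(\<Sum>pq\<in>I. (cmod (ip N (eh pq) (u t)))^2) \<le> Re (ip N (u t) (u t))"
        by (rule bessel[OF finI ehorth])
      also have "\<dots> = 1" using orthN[of t t] t by simp
      also have "(\<Sum>pq\<in>I. (cmod (ip N (eh pq) (u t)))^2) = (\<Sum>pq\<in>I. (cmod (a (fst pq) (snd pq) t))^2 / X (fst pq))"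
      proof (intro sum.cong refl)
        fix pq assume "pq \<in> I"
        then have X0: "X (fst pq) > 0" using Xnn[of "fst pq"] by (auto simp: I_def)
        have "ip N (eh pq) (u t) = cnj (c pq) * a (fst pq) (snd pq) t"
          unfolding eh_def ip_scale_left a_def by simp
        then show "(cmod (ip N (eh pq) (u t)))^2 = (cmod (a (fst pq) (snd pq) t))^2 / X (fst pq)"
          using X0 by (simp add: c_def norm_mult norm_divide power_mult_distrib power_divide)
      qed
      finally show ?thesis .
    qed
    have "(\<Sum>p<n. \<Sum>q<n. e p q) = (\<Sum>pq\<in>{..<n} \<times> {..<n}. e (fst pq) (snd pq))"
      by (simp add: sum.cartesian_product case_prod_beta)
    also have "\<dots> = (\<Sum>pq\<in>I. e (fst pq) (snd pq))"
      by (intro sum.mono_neutral_right) (auto simp: I_def e_def)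
    also have "\<dots> = (\<Sum>pq\<in>I. \<Sum>t<r. (cmod (a (fst pq) (snd pq) t))^2 / X (fst pq))"
      by (intro sum.cong refl) (auto simp: I_def e_def d_def sum_divide_distrib)
    also have "\<dots> = (\<Sum>t<r. \<Sum>pq\<in>I. (cmod (a (fst pq) (snd pq) t))^2 / X (fst pq))"
      by (rule sum.swap)
    also have "\<dots> \<le> (\<Sum>t<r. 1)" by (intro sum_mono bt) auto
    finally show ?thesis by simp
  qed
  have sumT: "(\<Sum>p<n. \<Sum>q<n. T p q) \<le> 2 * real r"
  proof -
    have "(\<Sum>p<n. \<Sum>q<n. T p q) \<le> (\<Sum>p<n. \<Sum>q<n. e p q + e q p)"
      using e01 by (intro sum_mono) (auto simp: T_def)
    also have "\<dots> = (\<Sum>p<n. \<Sum>q<n. e p q) + (\<Sum>p<n. \<Sum>q<n. e q p)" by (simp add: sum.distrib)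
    also have "(\<Sum>p<n. \<Sum>q<n. e q p) = (\<Sum>p<n. \<Sum>q<n. e p q)" by (rule sum.swap)
    finally show ?thesis using sum_e by simp
  qed
  have Ssum: "(\<Sum>p<n. \<sigma> p^2) = Re (ip (m*n) v v)"
  proof -
    have "ip (m*n) v v = (\<Sum>i<m. \<Sum>j<n. \<Sum>p<n. \<Sum>q<n. (cnj (A i q) * A i p) * (C j q * cnj (C j p)))"
      unfolding ip_def sum_split by (simp add: S1 cnj_sum sum_product mult_ac)
    also have "\<dots> = (\<Sum>i<m. \<Sum>p<n. \<Sum>q<n. \<Sum>j<n. (cnj (A i q) * A i p) * (C j q * cnj (C j p)))"
    proof (rule sum.cong[OF refl])
      fix i assume "i \<in> {..<m}"
      have "(\<Sum>j<n. \<Sum>p<n. \<Sum>q<n. (cnj (A i q) * A i p) * (C j q * cnj (C j p)))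
          = (\<Sum>p<n. \<Sum>j<n. \<Sum>q<n. (cnj (A i q) * A i p) * (C j q * cnj (C j p)))" by (rule sum.swap)
      also have "\<dots> = (\<Sum>p<n. \<Sum>q<n. \<Sum>j<n. (cnj (A i q) * A i p) * (C j q * cnj (C j p)))"
        by (intro sum.cong refl sum.swap)
      finally show "(\<Sum>j<n. \<Sum>p<n. \<Sum>q<n. (cnj (A i q) * A i p) * (C j q * cnj (C j p)))
          = (\<Sum>p<n. \<Sum>q<n. \<Sum>j<n. (cnj (A i q) * A i p) * (C j q * cnj (C j p)))" .
    qed
    also have "\<dots> = (\<Sum>i<m. \<Sum>p<n. \<Sum>q<n. (cnj (A i q) * A i p) * (if q = p then 1 else 0))"
    proof (intro sum.cong refl)
      fix i p q assume "i \<in> {..<m}" "p \<in> {..<n}" "q \<in> {..<n}"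
      then have pq: "p < n" "q < n" by auto
      have "(\<Sum>j<n. C j q * cnj (C j p)) = cnj (\<Sum>j<n. cnj (C j q) * C j p)"
        by (simp add: cnj_sum mult.commute)
      also have "\<dots> = cnj (if q = p then 1 else 0)" by (simp only: S3[OF pq(2,1)])
      also have "\<dots> = (if q = p then 1 else 0)" by simp
      finally have d: "(\<Sum>j<n. C j q * cnj (C j p)) = (if q = p then 1 else 0)" .
      show "(\<Sum>j<n. (cnj (A i q) * A i p) * (C j q * cnj (C j p))) = (cnj (A i q) * A i p) * (if q = p then 1 else 0)"
        by (simp only: sum_distrib_left[symmetric] d)
    qed
    also have "\<dots> = (\<Sum>i<m. \<Sum>p<n. cnj (A i p) * A i p)"
    proof (intro sum.cong refl)
      fix i p assume "i \<in> {..<m}" "p \<in> {..<n}"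
      have "(\<Sum>q<n. (cnj (A i q) * A i p) * (if q = p then 1 else 0)) = (\<Sum>q<n. if q = p then cnj (A i q) * A i p else 0)"
        by (intro sum.cong refl) auto
      also have "\<dots> = cnj (A i p) * A i p" using \<open>p \<in> {..<n}\<close> by (simp add: sum.delta)
      finally show "(\<Sum>q<n. (cnj (A i q) * A i p) * (if q = p then 1 else 0)) = cnj (A i p) * A i p" .
    qed
    also have "\<dots> = (\<Sum>p<n. \<Sum>i<m. cnj (A i p) * A i p)" by (rule sum.swap)
    also have "\<dots> = complex_of_real (\<Sum>p<n. X p)"
      by (simp add: X_def of_real_sum mult.commute[of "cnj _"] mult_cnj_real)
    finally show ?thesis by (simp add: sig2)
  qed
  have Mb: "- Re (M p q) \<le> T p q * \<sigma> p * \<sigma> q / 2" if pq: "p < n" "q < n" for p q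
  proof (cases "p = q")
    case True
    have "Re (M p q) = (\<Sum>t<r. (cmod (a p p t))^2)"
      unfolding M_def True by (simp add: Re_sum mult.commute[of "cnj _"] mult_cnj_real)
    moreover have "0 \<le> (\<Sum>t<r. (cmod (a p p t))^2)" by (simp add: sum_nonneg)
    ultimately show ?thesis using True by (simp add: T_def)
  next
    case False
    note pa = pair_ab[where a = "a p q" and b = "a q p" and X = "X p" and Y = "X q" and r = r, OF Xnn Xnn H[OF pq False], folded d_def M_def]
    have T0: "0 \<le> T p q" using Tprops[OF pq] by simp
    have Tnn: "0 \<le> T p q * \<sigma> p * \<sigma> q" using T0 Xnn[of p] Xnn[of q] by (intro mult_nonneg_nonneg) (auto simp: \<sigma>_def)
    have ReM: "- Re (M p q) \<le> cmod (M p q)" using abs_Re_le_cmod[of "M p q"] by linarith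
    show ?thesis
    proof (cases "X p = 0 \<or> X q = 0")
      case True
      then have "M p q = 0" using pa(5,6) by auto
      then show ?thesis using Tnn by simp
    next
      case False
      then have Xp: "X p > 0" and Xq: "X q > 0" using Xnn[of p] Xnn[of q] by auto
      define P where "P = sqrt (X p) * sqrt (X q)"
      have P0: "P > 0" using Xp Xq by (simp add: P_def)
      have PP: "P * P = X p * X q" using Xp Xq by (simp add: P_def mult_ac)
      have E1: "X q * d p q + X p * d q p = P * (P * (e p q + e q p))"
      proof -
        have "P * (P * (e p q + e q p)) = (P * P) * (e p q + e q p)" by (simp add: mult.assoc)
        also have "\<dots> = X p * X q * (d p q / X p + d q p / X q)" unfolding PP using Xp Xq by (simp add: e_def)
        also have "\<dots> = X q * d p q + X p * d q p" using Xp Xq by (simp add: field_simps)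
        finally show ?thesis by simp
      qed
      have E2: "2 * X p * X q - X q * d p q - X p * d q p = P * (P * (2 - e p q - e q p))"
      proof -
        have "P * (P * (2 - e p q - e q p)) = (P * P) * (2 - e p q - e q p)" by (simp add: mult.assoc)
        also have "\<dots> = X p * X q * (2 - d p q / X p - d q p / X q)" unfolding PP using Xp Xq by (simp add: e_def)
        also have "\<dots> = 2 * X p * X q - X q * d p q - X p * d q p" using Xp Xq by (simp add: field_simps)
        finally show ?thesis by simp
      qed
      have cmP: "2 * cmod (M p q) * P = 2 * sqrt (X p) * sqrt (X q) * cmod (M p q)" by (simp add: P_def mult_ac)
      have r1: "(P * (e p q + e q p)) * P = X q * d p q + X p * d q p" using E1 by (simp add: mult_ac)
      have "2 * cmod (M p q) * P \<le> (P * (e p q + e q p)) * P"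
        using pa(3) cmP r1 by linarith
      then have b1: "2 * cmod (M p q) \<le> P * (e p q + e q p)" using P0 by (rule mult_right_le_imp_le)
      have r2: "(P * (2 - e p q - e q p)) * P = 2 * X p * X q - X q * d p q - X p * d q p" using E2 by (simp add: mult_ac)
      have "2 * cmod (M p q) * P \<le> (P * (2 - e p q - e q p)) * P"
        using pa(4) cmP r2 by linarith
      then have b2: "2 * cmod (M p q) \<le> P * (2 - e p q - e q p)" using P0 by (rule mult_right_le_imp_le)
      have "2 * cmod (M p q) \<le> P * T p q"
        using b1 b2 \<open>p \<noteq> q\<close> by (simp add: T_def min_def)
      then show ?thesis using ReM by (simp add: P_def \<sigma>_def mult_ac)
    qed
  qed
  have "- Re (\<Sum>t<r. Gf m n v (u t)) = (\<Sum>p<n. \<Sum>q<n. - Re (M p q))"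
    unfolding sumG by (simp add: Re_sum sum_negf)
  also have "\<dots> \<le> (\<Sum>p<n. \<Sum>q<n. T p q * \<sigma> p * \<sigma> q / 2)"
    by (intro sum_mono Mb) auto
  also have "\<dots> = (\<Sum>p<n. \<Sum>q<n. T p q * \<sigma> p * \<sigma> q) / 2" by (simp add: sum_divide_distrib)
  finally have fin: "- Re (\<Sum>t<r. Gf m n v (u t)) \<le> (\<Sum>p<n. \<Sum>q<n. T p q * \<sigma> p * \<sigma> q) / 2" .
  show ?thesis
    by (rule exI[of _ \<sigma>], rule exI[of _ T]) (use Tprops Tdiag sumT Ssum fin Xnn in \<open>auto simp: \<sigma>_def\<close>)
qed


lemma cc_dd_lt: fixes a b m n :: nat assumes "a < m*n" "b < m*n"
  shows "cc n a b < m*n" "dd n a b < m*n"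
proof -
  have n0: "n > 0" using assms by (cases n) auto
  have "b div n < m" using assms(2) by (simp add: less_mult_imp_div_less)
  then have "b div n + 1 \<le> m" by simp
  then have "(b div n) * n + n \<le> m * n" by (metis add_mult_distrib mult_1 mult_le_mono1)
  then show "cc n a b < m*n" unfolding cc_def using n0 by (meson add_less_mono1 less_le_trans mod_less_divisor nat_add_left_cancel_less)
  have "a div n < m" using assms(1) by (simp add: less_mult_imp_div_less)
  then have "a div n + 1 \<le> m" by simp
  then have "(a div n) * n + n \<le> m * n" by (metis add_mult_distrib mult_1 mult_le_mono1)
  then show "dd n a b < m*n" unfolding dd_def using n0 by (meson add_less_mono1 less_le_trans mod_less_divisor nat_add_left_cancel_less)
qed

lemma cc_dd_eq: fixes a b n :: nat assumes "n > 0" shows "cc n a b = dd n a b \<longleftrightarrow> a = b"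
proof
  assume h: "cc n a b = dd n a b"
  then have "(cc n a b) mod n = (dd n a b) mod n" by simp
  then have m: "a mod n = b mod n" unfolding cc_def dd_def by simp
  have h2: "(b div n) * n + a mod n = (a div n) * n + b mod n" using h unfolding cc_def dd_def by simp
  have "(b div n) * n = (a div n) * n" using h2 m by linarith
  then have "b div n = a div n" using assms by simp
  then show "a = b" using m by (metis div_mult_mod_eq)
qed (simp add: cc_def dd_def)

lemma appt_general:
  fixes m n r :: nat and \<mu> :: real and lam :: "nat \<Rightarrow> complex"
  assumes n0: "n > 0" and rN: "r \<le> m*n" and mu0: "0 \<le> \<mu>"
    and key: "\<And>v u. (\<And>s t. s < r \<Longrightarrow> t < r \<Longrightarrow> ip (m*n) (u s) (u t) = (if s = t then 1 else 0))
       \<Longrightarrow> \<mu> * (- Re (\<Sum>t<r. Gf m n v (u t))) \<le> Re (ip (m*n) v v)"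
    and lam: "\<And>t. lam t = complex_of_real (1 + (if t < r then \<mu> else 0))"
  shows "absolutely_PPT m n (diag_mat_of (m*n) lam)"
proof -
  define N where "N = m * n"
  define \<rho> where "\<rho> = diag_mat_of N lam"
  have \<rho>c: "\<rho> \<in> carrier_mat N N" by (simp add: \<rho>_def diag_mat_of_def)
  have \<rho>ij: "\<rho> $$ (i,j) = (if i = j then lam i else 0)" if "i < N" "j < N" for i j
    using that by (simp add: \<rho>_def diag_mat_of_def)
  define Sv where "Sv v = (\<Sum>i<N. (1 + (if i < r then \<mu> else 0)) * (cmod (v $ i))^2)" for v :: "complex vec"
  have eqv: "(\<Sum>i<N. \<Sum>j<N. cnj (v $ i) * \<rho> $$ (i,j) * v $ j) = complex_of_real (Sv v)" for v :: "complex vec"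
  proof -
    have "(\<Sum>i<N. \<Sum>j<N. cnj (v $ i) * \<rho> $$ (i,j) * v $ j) = (\<Sum>i<N. cnj (v $ i) * lam i * v $ i)"
    proof (rule sum.cong[OF refl])
      fix i assume i: "i \<in> {..<N}"
      have "(\<Sum>j<N. cnj (v $ i) * \<rho> $$ (i,j) * v $ j) = (\<Sum>j<N. if j = i then cnj (v $ i) * lam i * v $ j else 0)"
        using i by (intro sum.cong refl) (auto simp: \<rho>ij)
      also have "\<dots> = cnj (v $ i) * lam i * v $ i" using i by (simp add: sum.delta)
      finally show "(\<Sum>j<N. cnj (v $ i) * \<rho> $$ (i,j) * v $ j) = cnj (v $ i) * lam i * v $ i" .
    qed
    also have "\<dots> = (\<Sum>i<N. complex_of_real ((1 + (if i < r then \<mu> else 0)) * (cmod (v $ i))^2))"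
    proof (rule sum.cong[OF refl])
      fix i
      have "cnj (v $ i) * lam i * v $ i = lam i * (v $ i * cnj (v $ i))" by (simp add: mult_ac)
      also have "\<dots> = complex_of_real (1 + (if i < r then \<mu> else 0)) * complex_of_real ((cmod (v $ i))^2)"
        unfolding lam mult_cnj_real by simp
      finally show "cnj (v $ i) * lam i * v $ i = complex_of_real ((1 + (if i < r then \<mu> else 0)) * (cmod (v $ i))^2)"
        by simp
    qed
    also have "\<dots> = complex_of_real (Sv v)" by (simp add: Sv_def of_real_sum)
    finally show ?thesis .
  qed
  have Svnn: "0 \<le> Sv v" for v unfolding Sv_def using mu0 by (intro sum_nonneg mult_nonneg_nonneg) auto
  have psd\<rho>: "psd_mat N \<rho>" unfolding psd_mat_def Let_def eqv using \<rho>c Svnn by simp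
  have PT: "psd_mat N (partial_transpose m n (U * \<rho> * adjoint_mat U))" if U: "unitary_mat N U" for U
  proof -
    have Uc: "U \<in> carrier_mat N N" and UU: "U * adjoint_mat U = 1\<^sub>m N" and UU2: "adjoint_mat U * U = 1\<^sub>m N"
      using U by (auto simp: unitary_mat_def)
    have URc: "U * \<rho> \<in> carrier_mat N N" using Uc \<rho>c by simp
    define X where "X = U * \<rho> * adjoint_mat U"
    have Ur: "(U * \<rho>) $$ (c,t) = U $$ (c,t) * lam t" if "c < N" "t < N" for c t
    proof -
      have "(U * \<rho>) $$ (c,t) = (\<Sum>s<N. U $$ (c,s) * \<rho> $$ (s,t))"
        using Uc \<rho>c that by (simp add: scalar_prod_def atLeast0LessThan)
      also have "\<dots> = (\<Sum>s<N. if s = t then U $$ (c,s) * lam t else 0)"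
        using that by (intro sum.cong refl) (auto simp: \<rho>ij)
      also have "\<dots> = U $$ (c,t) * lam t" using that by (simp add: sum.delta)
      finally show ?thesis .
    qed
    have Xij: "X $$ (c,d) = (\<Sum>t<N. U $$ (c,t) * lam t * cnj (U $$ (d,t)))" if "c < N" "d < N" for c d
    proof -
      have "X $$ (c,d) = (\<Sum>t<N. (U * \<rho>) $$ (c,t) * adjoint_mat U $$ (t,d))"
      proof -
        have d: "dim_col (U * \<rho>) = N" "dim_row (U * \<rho>) = N" using URc by auto
        show ?thesis using d Uc that by (simp add: X_def scalar_prod_def atLeast0LessThan)
      qed
      also have "\<dots> = (\<Sum>t<N. U $$ (c,t) * lam t * cnj (U $$ (d,t)))"
        using that Uc by (intro sum.cong refl) (simp add: Ur)
      finally show ?thesis .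
    qed
    have UUd: "(\<Sum>t<N. U $$ (c,t) * cnj (U $$ (d,t))) = (if c = d then 1 else 0)" if "c < N" "d < N" for c d
    proof -
      have "(\<Sum>t<N. U $$ (c,t) * cnj (U $$ (d,t))) = (U * adjoint_mat U) $$ (c,d)"
        using Uc that by (simp add: scalar_prod_def atLeast0LessThan)
      then show ?thesis using UU that by simp
    qed
    define u where "u t a = U $$ (a,t)" for t a
    have orthu: "ip (m*n) (u s) (u t) = (if s = t then 1 else 0)" if "s < r" "t < r" for s t
    proof -
      have "ip (m*n) (u s) (u t) = (adjoint_mat U * U) $$ (s,t)"
        using Uc that rN by (simp add: ip_def u_def N_def scalar_prod_def atLeast0LessThan)
      then show ?thesis using UU2 that rN by (simp add: N_def)
    qed
    have PTc: "partial_transpose m n X \<in> carrier_mat N N" by (simp add: partial_transpose_def N_def)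
    have PTab: "partial_transpose m n X $$ (a,b) = X $$ (cc n a b, dd n a b)" if "a < N" "b < N" for a b
      using that by (simp add: partial_transpose_def cc_def dd_def N_def)
    have main: "Im q = 0 \<and> 0 \<le> Re q" if q: "q = (\<Sum>a<N. \<Sum>b<N. cnj (v $ a) * partial_transpose m n X $$ (a,b) * v $ b)"
      for v :: "complex vec" and q
    proof -
      define vf where "vf a = v $ a" for a
      have ccdd: "cc n a b < N" "dd n a b < N" if "a < N" "b < N" for a b
        using cc_dd_lt[of a m n b] that by (auto simp: N_def)
      have "q = (\<Sum>a<N. \<Sum>b<N. \<Sum>t<N. lam t * (cnj (vf a) * u t (cc n a b) * cnj (u t (dd n a b)) * vf b))"
        unfolding q
      proof (intro sum.cong refl)
        fix a b assume ab: "a \<in> {..<N}" "b \<in> {..<N}"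
        then show "cnj (v $ a) * partial_transpose m n X $$ (a,b) * v $ b
            = (\<Sum>t<N. lam t * (cnj (vf a) * u t (cc n a b) * cnj (u t (dd n a b)) * vf b))"
          using ccdd[of a b] by (simp add: PTab Xij sum_distrib_left sum_distrib_right vf_def u_def mult_ac)
      qed
      also have "\<dots> = (\<Sum>t<N. lam t * Gf m n vf (u t))"
      proof -
        have "(\<Sum>a<N. \<Sum>b<N. \<Sum>t<N. lam t * (cnj (vf a) * u t (cc n a b) * cnj (u t (dd n a b)) * vf b))
          = (\<Sum>a<N. \<Sum>t<N. \<Sum>b<N. lam t * (cnj (vf a) * u t (cc n a b) * cnj (u t (dd n a b)) * vf b))"
          by (intro sum.cong refl sum.swap)
        also have "\<dots> = (\<Sum>t<N. \<Sum>a<N. \<Sum>b<N. lam t * (cnj (vf a) * u t (cc n a b) * cnj (u t (dd n a b)) * vf b))"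
          by (rule sum.swap)
        also have "\<dots> = (\<Sum>t<N. lam t * Gf m n vf (u t))"
          by (simp add: Gf_def N_def sum_distrib_left)
        finally show ?thesis .
      qed
      also have "\<dots> = (\<Sum>t<N. Gf m n vf (u t)) + complex_of_real \<mu> * (\<Sum>t<r. Gf m n vf (u t))"
      proof -
        have "(\<Sum>t<N. lam t * Gf m n vf (u t)) = (\<Sum>t<N. Gf m n vf (u t) + (if t < r then complex_of_real \<mu> * Gf m n vf (u t) else 0))"
          by (intro sum.cong refl) (simp add: lam algebra_simps)
        also have "\<dots> = (\<Sum>t<N. Gf m n vf (u t)) + (\<Sum>t\<in>{..<N} \<inter> {t. t < r}. complex_of_real \<mu> * Gf m n vf (u t))"
          by (simp add: sum.distrib sum.inter_restrict)
        also have "{..<N} \<inter> {t. t < r} = {..<r}" using rN by (auto simp: N_def)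
        finally show ?thesis by (simp add: sum_distrib_left)
      qed
      also have "(\<Sum>t<N. Gf m n vf (u t)) = ip N vf vf"
      proof -
        have "(\<Sum>t<N. Gf m n vf (u t)) = (\<Sum>t<N. \<Sum>a<N. \<Sum>b<N. cnj (vf a) * vf b * (U $$ (cc n a b, t) * cnj (U $$ (dd n a b, t))))"
          by (simp add: Gf_def N_def u_def mult_ac)
        also have "\<dots> = (\<Sum>a<N. \<Sum>t<N. \<Sum>b<N. cnj (vf a) * vf b * (U $$ (cc n a b, t) * cnj (U $$ (dd n a b, t))))"
          by (rule sum.swap)
        also have "\<dots> = (\<Sum>a<N. \<Sum>b<N. \<Sum>t<N. cnj (vf a) * vf b * (U $$ (cc n a b, t) * cnj (U $$ (dd n a b, t))))"
          by (intro sum.cong refl sum.swap)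
        also have "\<dots> = (\<Sum>a<N. \<Sum>b<N. if b = a then cnj (vf a) * vf b else 0)"
        proof (intro sum.cong refl)
          fix a b assume ab: "a \<in> {..<N}" "b \<in> {..<N}"
          have "(\<Sum>t<N. cnj (vf a) * vf b * (U $$ (cc n a b, t) * cnj (U $$ (dd n a b, t)))) = cnj (vf a) * vf b * (if cc n a b = dd n a b then 1 else 0)"
            using ab ccdd[of a b] by (simp add: sum_distrib_left[symmetric] UUd)
          then show "(\<Sum>t<N. cnj (vf a) * vf b * (U $$ (cc n a b, t) * cnj (U $$ (dd n a b, t)))) = (if b = a then cnj (vf a) * vf b else 0)"
            using cc_dd_eq[OF n0, of a b] by auto
        qed
        also have "\<dots> = ip N vf vf" by (simp add: ip_def sum.delta)
        finally show ?thesis .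
      qed
      finally have qeq: "q = ip N vf vf + complex_of_real \<mu> * (\<Sum>t<r. Gf m n vf (u t))" .
      have ImG: "Im (\<Sum>t<r. Gf m n vf (u t)) = 0" by (simp add: Im_sum Gf_real)
      have k: "\<mu> * (- Re (\<Sum>t<r. Gf m n vf (u t))) \<le> Re (ip (m*n) vf vf)" by (rule key[OF orthu])
      show ?thesis unfolding qeq using ImG k by (simp add: ip_self N_def algebra_simps)
    qed
    show ?thesis unfolding psd_mat_def Let_def X_def[symmetric] using PTc main by blast
  qed
  show ?thesis unfolding absolutely_PPT_def using psd\<rho> PT by (simp add: \<rho>_def N_def)
qed


lemma key_bound:
  fixes m n r :: nat and v :: "nat \<Rightarrow> complex" and u :: "nat \<Rightarrow> nat \<Rightarrow> complex"
  assumes orth: "\<And>s t. s < r \<Longrightarrow> t < r \<Longrightarrow> ip (m*n) (u s) (u t) = (if s = t then 1 else 0)"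
  shows "r = 2 \<Longrightarrow> sqrt 2 * (- Re (\<Sum>t<r. Gf m n v (u t))) \<le> Re (ip (m*n) v v)"
    and "r = 3 \<Longrightarrow> 1 * (- Re (\<Sum>t<r. Gf m n v (u t))) \<le> Re (ip (m*n) v v)"
proof -
  obtain \<sigma> T where s0: "\<forall>p<n. 0 \<le> \<sigma> p" and Tp: "\<forall>p<n. \<forall>q<n. T p q = T q p \<and> 0 \<le> T p q \<and> T p q \<le> 1"
    and Td: "\<forall>p<n. T p p = 0" and Ts: "(\<Sum>p<n. \<Sum>q<n. T p q) \<le> 2 * real r"
    and Ss: "(\<Sum>p<n. \<sigma> p^2) = Re (ip (m*n) v v)"
    and G: "- Re (\<Sum>t<r. Gf m n v (u t)) \<le> (\<Sum>p<n. \<Sum>q<n. T p q * \<sigma> p * \<sigma> q) / 2"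
  proof -
    have "\<exists>\<sigma> T. (\<forall>p<n. 0 \<le> \<sigma> p) \<and> (\<forall>p<n. \<forall>q<n. T p q = T q p \<and> 0 \<le> T p q \<and> T p q \<le> 1) \<and> (\<forall>p<n. T p p = 0)
     \<and> (\<Sum>p<n. \<Sum>q<n. T p q) \<le> 2 * real r \<and> (\<Sum>p<n. \<sigma> p^2) = Re (ip (m*n) v v)
     \<and> - Re (\<Sum>t<r. Gf m n v (u t)) \<le> (\<Sum>p<n. \<Sum>q<n. T p q * \<sigma> p * \<sigma> q) / 2"
      by (rule core) (rule orth; assumption)
    then show ?thesis by (elim exE conjE) (rule that; assumption)
  qed
  have sym: "\<And>p q. p < n \<Longrightarrow> q < n \<Longrightarrow> T p q = T q p" and nn: "\<And>p q. p < n \<Longrightarrow> q < n \<Longrightarrow> 0 \<le> T p q"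
    and le1: "\<And>p q. p < n \<Longrightarrow> q < n \<Longrightarrow> T p q \<le> 1" and dg: "\<And>p. p < n \<Longrightarrow> T p p = 0"
    and snn: "\<And>p. p < n \<Longrightarrow> 0 \<le> \<sigma> p"
    using Tp Td s0 by auto
  show "sqrt 2 * (- Re (\<Sum>t<r. Gf m n v (u t))) \<le> Re (ip (m*n) v v)" if r: "r = 2"
  proof -
    have F: "(\<Sum>p<n. \<Sum>q<n. T p q * \<sigma> p * \<sigma> q) \<le> sqrt 2 * (\<Sum>p<n. \<sigma> p^2)"
      by (rule opt2[OF sym nn le1 dg _ snn]) (use Ts r in auto)
    have "sqrt 2 * (- Re (\<Sum>t<r. Gf m n v (u t))) \<le> sqrt 2 * ((\<Sum>p<n. \<Sum>q<n. T p q * \<sigma> p * \<sigma> q) / 2)"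
      using G by (intro mult_left_mono) auto
    also have "\<dots> \<le> sqrt 2 * (sqrt 2 * (\<Sum>p<n. \<sigma> p^2) / 2)"
      using F by (intro mult_left_mono) auto
    also have "\<dots> = (\<Sum>p<n. \<sigma> p^2)" by (simp add: mult.assoc[symmetric])
    finally show ?thesis using Ss by simp
  qed
  show "1 * (- Re (\<Sum>t<r. Gf m n v (u t))) \<le> Re (ip (m*n) v v)" if r: "r = 3"
  proof -
    have F: "(\<Sum>p<n. \<Sum>q<n. T p q * \<sigma> p * \<sigma> q) \<le> 2 * (\<Sum>p<n. \<sigma> p^2)"
      by (rule opt3[OF sym nn le1 dg]) (use Ts r in auto)
    show ?thesis using G F Ss by simp
  qed
qed

theorem lemma7:
  fixes m n :: nat
  assumes "m \<ge> 2" and "n \<ge> 2"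
  shows "absolutely_PPT m n (rho1 m n) \<and> absolutely_PPT m n (rho2 m n)"
proof
  have n0: "n > 0" using assms by simp
  have mn: "4 \<le> m * n" using mult_le_mono[OF assms] by simp
  have r1: "rho1 m n = diag_mat_of (m*n) (\<lambda>t. complex_of_real (1 + (if t < 2 then sqrt 2 else 0)))"
    unfolding rho1_def by (rule arg_cong[where f = "diag_mat_of (m*n)"]) (auto simp: add.commute)
  show "absolutely_PPT m n (rho1 m n)"
    unfolding r1
    by (rule appt_general[OF n0 _ _ key_bound(1)]) (use mn in auto)
  have r2: "rho2 m n = diag_mat_of (m*n) (\<lambda>t. complex_of_real (1 + (if t < 3 then 1 else 0)))"
    unfolding rho2_def by (rule arg_cong[where f = "diag_mat_of (m*n)"]) auto
  show "absolutely_PPT m n (rho2 m n)"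
    unfolding r2
    by (rule appt_general[OF n0 _ _ key_bound(2)]) (use mn in auto)
qed

end
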